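(* Let $\mathcal{E}_{\mathrm{MUB}}$ be the minimal Clifford measurement ensemble described in the context, let $V$ be any $n$-qubit Clifford unitary, $O=V^{\dagger}|\mathbf{0}\rangle\langle\mathbf{0}|V$, and for $U\in\mathcal{E}_{\mathrm{MUB}}$, $\mathbf{b}\in\{0,1\}^n$ let $\alpha_{U,\mathbf{b}}=\operatorname{tr}(O\,U^{\dagger}|\mathbf{b}\rangle\langle\mathbf{b}|U)=|\langle\mathbf{b}|UV^{\dagger}|\mathbf{0}\rangle|^2$. Then $$\sum_{U\in\mathcal{E}_{\mathrm{MUB}}}\max_{\mathbf{b}}\alpha_{U,\mathbf{b}}=2.$$ Moreover, for each $U\in\mathcal{E}_{\mathrm{MUB}}$, if the Z-Tableau of $UV^{\dagger}$ is $[C,D]$ and $r_U=\mathrm{rank}_{\mathbb{F}_2}(C)$, then exactly $2^{r_U}$ of the values $\alpha_{U,\mathbf{b}}$, $\mathbf{b}\in\{0,1\}^n$, equal $2^{-r_U}$ and the remaining $2^n-2^{r_U}$ equal $0$.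
   Context: Galois arithmetic: fix an irreducible polynomial $P_n(x)$ of degree $n$ over $\mathrm{GF}(2)$; integers $a=\sum_i a_i2^i\in\{0,\dots,2^n-1\}$ are identified with polynomials $\sum_ia_ix^i$ and row vectors $(a_0,\dots,a_{n-1})$, and $a\odot b=a(x)b(x)\bmod P_n(x)$. Let $\Gamma_{k,j}$ be the coefficient of $x^j$ in $x^k\bmod P_n$, and $M_n^{(0)}$ the $n\times n$ binary matrix with entries $\Gamma_{p+q,0}$. For $v\in\{0,\dots,2^n-1\}$ let $\alpha_{v,i,j}$ be the $j$-th entry of $(v\odot 2^i)M_n^{(0)}$ mod 2 and $g_i^{(v)}=\sqrt{-1}^{\,\alpha_{v,i,i}}X_i\prod_jZ_j^{\alpha_{v,i,j}}$ ($X_i,Z_i$ Paulis on qubit $i$). $\mathcal{E}_{\mathrm{MUB}}=\{\mathbb{I}\}\cup\{U_v\}_{v=0}^{2^n-1}$, where $U_v$ is a Clifford unitary with $U_v^{\dagger}Z_iU_v=\pm g_i^{(v)}$ for all $i$. Z-Tableau: for a Clifford unitary $W$, write $W^{\dagger}Z_iW=\pm\prod_{j=0}^{n-1}X_j^{\gamma_{ij}}Z_j^{\delta_{ij}}$ (up to phase) with $\gamma_{ij},\delta_{ij}\in\{0,1\}$; the Z-Tableau of $W$ is the pair $[C,D]$ of $n\times n$ binary matrices $C=[\gamma_{ij}]$, $D=[\delta_{ij}]$. *)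

theory Defs
  imports "HOL-Library.Z2" "HOL-Computational_Algebra.Polynomial"
    "HOL-Computational_Algebra.Factorial_Ring"
    "Jordan_Normal_Form.Schur_Decomposition" "Jordan_Normal_Form.DL_Rank"
begin

text \<open>An n-bit string (a_0,...,a_{n-1}) is encoded by the natural number
  sum_i a_i 2^i; its i-th entry is the Boolean bit a i.\<close>

definition mask_of :: "nat \<Rightarrow> (nat \<Rightarrow> bool) \<Rightarrow> nat" where
  "mask_of n f = (\<Sum>j<n. if f j then 2 ^ j else 0)"

text \<open>Computational basis state |c> is the c-th standard basis vector of C^(2^n);
  qubit j is bit j of c. The Pauli string X^a Z^b = prod_j X_j^{a_j} Z_j^{b_j}
  maps |c> to (-1)^{b.c} |c xor a>.\<close>

definition pauli :: "nat \<Rightarrow> nat \<Rightarrow> nat \<Rightarrow> complex mat" where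
  "pauli n a b = mat (2 ^ n) (2 ^ n)
     (\<lambda>(r::nat, s::nat). if r = xor s a then (-1) ^ card {j. j < n \<and> bit b j \<and> bit s j} else 0)"

definition Xq :: "nat \<Rightarrow> nat \<Rightarrow> complex mat" where
  "Xq n i = pauli n (2 ^ i) 0"

definition Zq :: "nat \<Rightarrow> nat \<Rightarrow> complex mat" where
  "Zq n i = pauli n 0 (2 ^ i)"

definition unitary_mat :: "nat \<Rightarrow> complex mat \<Rightarrow> bool" where
  "unitary_mat n U \<longleftrightarrow> U \<in> carrier_mat (2 ^ n) (2 ^ n) \<and> U * mat_adjoint U = 1\<^sub>m (2 ^ n)"

definition clifford :: "nat \<Rightarrow> complex mat \<Rightarrow> bool" where
  "clifford n U \<longleftrightarrow> unitary_mat n U \<and>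
     (\<forall>a < 2 ^ n. \<forall>b < 2 ^ n. \<exists>(ph::complex) a' b'. a' < 2 ^ n \<and> b' < 2 ^ n \<and>
        U * pauli n a b * mat_adjoint U = ph \<cdot>\<^sub>m pauli n a' b')"

definition z_tableau :: "nat \<Rightarrow> complex mat \<Rightarrow> bit mat \<Rightarrow> bit mat \<Rightarrow> bool" where
  "z_tableau n W C D \<longleftrightarrow> C \<in> carrier_mat n n \<and> D \<in> carrier_mat n n \<and>
     (\<forall>i < n. \<exists>(ph::complex).
        mat_adjoint W * Zq n i * W =
          ph \<cdot>\<^sub>m pauli n (mask_of n (\<lambda>j. C $$ (i, j) = 1)) (mask_of n (\<lambda>j. D $$ (i, j) = 1)))"

definition rank_F2 :: "bit mat \<Rightarrow> nat" where
  "rank_F2 C = vec_space.rank (dim_row C) C"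

definition poly_of_nat :: "nat \<Rightarrow> nat \<Rightarrow> bit poly" where
  "poly_of_nat n a = Poly (map (\<lambda>i. of_bool (bit a i)) [0..<n])"

definition Gamma :: "bit poly \<Rightarrow> nat \<Rightarrow> nat \<Rightarrow> bit" where
  "Gamma P k j = coeff (monom 1 k mod P) j"

definition M0 :: "bit poly \<Rightarrow> nat \<Rightarrow> nat \<Rightarrow> bit" where
  "M0 P p q = Gamma P (p + q) 0"

text \<open>alpha_{v,i,j}: j-th entry of (v (.) 2^i) M0 (mod 2); note 2^i corresponds to x^i.\<close>
definition alpha_mub :: "nat \<Rightarrow> bit poly \<Rightarrow> nat \<Rightarrow> nat \<Rightarrow> nat \<Rightarrow> bit" where
  "alpha_mub n P v i j =
     (\<Sum>p<n. coeff ((poly_of_nat n v * monom 1 i) mod P) p * M0 P p j)"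

definition g_mub :: "nat \<Rightarrow> bit poly \<Rightarrow> nat \<Rightarrow> nat \<Rightarrow> complex mat" where
  "g_mub n P v i =
     (\<i> ^ (if alpha_mub n P v i i = 1 then 1 else 0)) \<cdot>\<^sub>m
       pauli n (2 ^ i) (mask_of n (\<lambda>j. alpha_mub n P v i j = 1))"

definition mub_family :: "nat \<Rightarrow> bit poly \<Rightarrow> (nat \<Rightarrow> complex mat) \<Rightarrow> bool" where
  "mub_family n P Uf \<longleftrightarrow> (\<forall>v < 2 ^ n. clifford n (Uf v) \<and>
     (\<forall>i < n. \<exists>s::complex. (s = 1 \<or> s = -1) \<and>
        mat_adjoint (Uf v) * Zq n i * Uf v = s \<cdot>\<^sub>m g_mub n P v i))"

definition mub_ensemble :: "nat \<Rightarrow> (nat \<Rightarrow> complex mat) \<Rightarrow> complex mat list" where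
  "mub_ensemble n Uf = 1\<^sub>m (2 ^ n) # map Uf [0..<2 ^ n]"

definition outcome_prob :: "complex mat \<Rightarrow> complex mat \<Rightarrow> nat \<Rightarrow> real" where
  "outcome_prob U V b = (cmod ((U * mat_adjoint V) $$ (b, 0)))\<^sup>2"

end

theory Submission
  imports Defs
begin


section \<open>Bits\<close>

lemma bit_lt_pow: "(a::nat) < 2 ^ n \<Longrightarrow> bit a j \<Longrightarrow> j < n"
  by (metis bit_take_bit_iff take_bit_nat_eq_self)

lemma lt_pow_iff_bits: "(a::nat) < 2 ^ n \<longleftrightarrow> (\<forall>j. bit a j \<longrightarrow> j < n)"
proof
  assume "\<forall>j. bit a j \<longrightarrow> j < n"
  hence "take_bit n a = a" by (intro bit_eqI) (auto simp: bit_take_bit_iff)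
  thus "a < 2 ^ n" by (metis take_bit_nat_eq_self_iff)
qed (auto intro: bit_lt_pow)

lemma xor_lt_pow: "(a::nat) < 2 ^ n \<Longrightarrow> b < 2 ^ n \<Longrightarrow> xor a b < 2 ^ n"
  by (auto simp: lt_pow_iff_bits bit_xor_iff)

lemma eq_by_bits: "(a::nat) < 2 ^ n \<Longrightarrow> b < 2 ^ n \<Longrightarrow> (\<forall>j<n. bit a j = bit b j) \<Longrightarrow> a = b"
  by (intro bit_eqI) (metis bit_lt_pow)

definition sg :: "nat \<Rightarrow> nat \<Rightarrow> nat \<Rightarrow> complex" where
  "sg n b s = (-1) ^ card {j. j < n \<and> bit b j \<and> bit s j}"

lemma sg_0n[simp]: "sg 0 b s = 1" by (simp add: sg_def)

lemma sg_Suc: "sg (Suc n) b s = sg n b s * (if bit b n \<and> bit s n then -1 else 1)"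
proof -
  have e: "{j. j < Suc n \<and> bit b j \<and> bit s j} =
     {j. j < n \<and> bit b j \<and> bit s j} \<union> (if bit b n \<and> bit s n then {n} else {})"
    by (auto simp: less_Suc_eq)
  show ?thesis unfolding sg_def e by (auto simp: card_insert_if)
qed

lemma sg_comm: "sg n b s = sg n s b"
  unfolding sg_def by (metis (mono_tags, lifting) Collect_cong)

lemma sg_xor_right: "sg n b (xor s t) = sg n b s * sg n b t"
  by (induction n) (simp_all add: sg_Suc bit_xor_iff)

lemma sg_xor_left: "sg n (xor s t) b = sg n s b * sg n t b"
  using sg_xor_right sg_comm by metis

lemma sg_zero_left[simp]: "sg n 0 s = 1" by (simp add: sg_def)
lemma sg_zero_right[simp]: "sg n s 0 = 1" by (simp add: sg_def)

lemma sg_sq: "sg n b s * sg n b s = 1"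
  by (induction n) (auto simp: sg_Suc)

lemma sg_pow2: "j < n \<Longrightarrow> sg n b (2 ^ j) = (if bit b j then -1 else 1)"
proof -
  assume j: "j < n"
  have "{i. i < n \<and> bit b i \<and> bit ((2::nat) ^ j) i} = (if bit b j then {j} else {})"
    using j by (auto simp: bit_exp_iff)
  thus ?thesis unfolding sg_def by auto
qed

lemma sg_take_bit: "sg n b (take_bit n s) = sg n b s"
  unfolding sg_def by (metis (lifting) bit_take_bit_iff)

lemma sum_pow2_Suc: "(\<Sum>x<(2::nat) ^ Suc n. f x) = (\<Sum>x<2 ^ n. f x) + (\<Sum>x<2 ^ n. f (x + 2 ^ n))"
proof -
  have "{..<(2::nat) ^ Suc n} = {..<2 ^ n} \<union> {2 ^ n..<2 ^ n + 2 ^ n}" by auto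
  moreover have "(\<Sum>x\<in>{2 ^ n..<2 ^ n + 2 ^ n}. f x) = (\<Sum>x<2 ^ n. f (x + 2 ^ n))"
    by (metis add.commute add_0 atLeast0LessThan sum.shift_bounds_nat_ivl)
  moreover have "sum f ({..<2 ^ n} \<union> {2 ^ n..<2 ^ n + 2 ^ n}) = sum f {..<2 ^ n} + sum f {2 ^ n..<2 ^ n + 2 ^ n}"
    by (rule sum.union_disjoint) auto
  ultimately show ?thesis by simp
qed

lemma char_sum: "(\<Sum>x<2 ^ n. sg n x c) = (if (\<forall>j<n. \<not> bit c j) then 2 ^ n else 0)"
proof (induction n)
  case 0 thus ?case by simp
next
  case (Suc n)
  have A: "x < 2 ^ n \<Longrightarrow> sg (Suc n) x c = sg n x c" for x
    by (simp add: sg_Suc) (metis bit_lt_pow less_irrefl)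
  have B: "x < 2 ^ n \<Longrightarrow> sg (Suc n) (x + 2 ^ n) c = sg n x c * (if bit c n then -1 else 1)" for x
  proof -
    assume x: "x < 2 ^ n"
    have "take_bit n (x + 2 ^ n) = x" using x by (simp add: take_bit_eq_mod)
    hence "sg n (x + 2 ^ n) c = sg n x c" by (metis sg_comm sg_take_bit)
    moreover have "bit (x + 2 ^ n) n"
    proof -
      have "\<And>k. \<not> bit x k \<or> \<not> bit ((2::nat) ^ n) k"
        using x by (auto simp: bit_exp_iff dest: bit_lt_pow)
      thus ?thesis by (simp add: bit_disjunctive_add_iff bit_exp_iff)
    qed
    ultimately show ?thesis by (simp add: sg_Suc)
  qed
  have "(\<Sum>x<2 ^ Suc n. sg (Suc n) x c) = (\<Sum>x<2 ^ n. sg n x c) * (1 + (if bit c n then -1 else 1))"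
    unfolding sum_pow2_Suc by (simp add: A B sum_distrib_right[symmetric] algebra_simps sum.distrib)
  thus ?case using Suc.IH by (auto simp: less_Suc_eq)
qed




section \<open>Pauli matrices\<close>

lemma pauli_carrier[simp]: "pauli n a b \<in> carrier_mat (2 ^ n) (2 ^ n)"
  by (simp add: pauli_def)

lemma pauli_dim[simp]: "dim_row (pauli n a b) = 2 ^ n" "dim_col (pauli n a b) = 2 ^ n"
  by (simp_all add: pauli_def)

lemma pauli_index: "r < 2 ^ n \<Longrightarrow> s < 2 ^ n \<Longrightarrow>
  pauli n a b $$ (r, s) = (if r = xor s a then sg n b s else 0)"
  by (simp add: pauli_def sg_def)

lemma pauli_mult:
  assumes "a < 2 ^ n" "a' < 2 ^ n"
  shows "pauli n a b * pauli n a' b' = sg n b a' \<cdot>\<^sub>m pauli n (xor a a') (xor b b')"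
proof (rule eq_matI)
  fix r s assume r: "r < dim_row (sg n b a' \<cdot>\<^sub>m pauli n (xor a a') (xor b b'))"
    and s: "s < dim_col (sg n b a' \<cdot>\<^sub>m pauli n (xor a a') (xor b b'))"
  hence r: "r < 2 ^ n" and s: "s < 2 ^ n" by auto
  have t0: "xor s a' < 2 ^ n" using s assms by (simp add: xor_lt_pow)
  have "(pauli n a b * pauli n a' b') $$ (r, s) =
     (\<Sum>t<2 ^ n. pauli n a b $$ (r, t) * pauli n a' b' $$ (t, s))"
    using r s by (simp add: scalar_prod_def atLeast0LessThan[symmetric])
  also have "\<dots> = (\<Sum>t<2 ^ n. if t = xor s a' then pauli n a b $$ (r, t) * sg n b' s else 0)"
    by (rule sum.cong) (auto simp: pauli_index s)
  also have "\<dots> = pauli n a b $$ (r, xor s a') * sg n b' s"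
    using t0 by (simp add: sum.delta)
  also have "\<dots> = (if r = xor s (xor a a') then sg n b a' * sg n (xor b b') s else 0)"
    using r t0 by (simp add: pauli_index sg_xor_right sg_xor_left xor.assoc xor.commute xor.left_commute)
  also have "\<dots> = (sg n b a' \<cdot>\<^sub>m pauli n (xor a a') (xor b b')) $$ (r, s)"
    using r s by (simp add: pauli_index)
  finally show "(pauli n a b * pauli n a' b') $$ (r, s) = (sg n b a' \<cdot>\<^sub>m pauli n (xor a a') (xor b b')) $$ (r, s)" .
qed auto

lemma pauli_00: "pauli n 0 0 = 1\<^sub>m (2 ^ n)"
  by (rule eq_matI) (auto simp: pauli_index)

lemma pauli_entry00: "pauli n a b $$ (0, 0) = (if a = 0 then 1 else 0)"
  by (simp add: pauli_index)

lemma pauli0_mult: "pauli n 0 x * pauli n 0 y = pauli n 0 (xor x y)"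
proof -
  have "pauli n 0 x * pauli n 0 y = 1 \<cdot>\<^sub>m pauli n 0 (xor x y)"
    using pauli_mult[of 0 n 0 x y] by simp
  also have "\<dots> = pauli n 0 (xor x y)" by (rule eq_matI) auto
  finally show ?thesis .
qed

lemma pauli_nonzero: "a < 2 ^ n \<Longrightarrow> pauli n a b $$ (a, 0) = 1"
  by (simp add: pauli_index)

lemma pauli_unique:
  assumes ph: "ph \<noteq> 0" and a: "a < 2 ^ n" "a' < 2 ^ n" and b: "b < 2 ^ n" "b' < 2 ^ n"
    and eq: "ph \<cdot>\<^sub>m pauli n a b = ph' \<cdot>\<^sub>m pauli n a' b'"
  shows "a = a' \<and> b = b'"
proof -
  have "(ph \<cdot>\<^sub>m pauli n a b) $$ (a, 0) = (ph' \<cdot>\<^sub>m pauli n a' b') $$ (a, 0)" using eq by simp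
  hence e1: "ph = (if a = a' then ph' else 0)" using a by (simp add: pauli_index)
  hence aa: "a = a'" using ph by (auto split: if_splits)
  hence pp: "ph = ph'" using e1 by simp
  have "\<forall>j<n. bit b j = bit b' j"
  proof (intro allI impI)
    fix j assume j: "j < n"
    have s: "(2::nat) ^ j < 2 ^ n" using j by simp
    hence xs: "xor (2 ^ j) a < 2 ^ n" using a by (simp add: xor_lt_pow)
    have "(ph \<cdot>\<^sub>m pauli n a b) $$ (xor (2 ^ j) a, 2 ^ j) = (ph' \<cdot>\<^sub>m pauli n a' b') $$ (xor (2 ^ j) a, 2 ^ j)"
      using eq by simp
    hence "ph * sg n b (2 ^ j) = ph * sg n b' (2 ^ j)" using s xs aa pp by (simp add: pauli_index)
    hence "sg n b (2 ^ j) = sg n b' (2 ^ j)" using ph by simp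
    thus "bit b j = bit b' j" using j by (auto simp: sg_pow2 split: if_splits)
  qed
  thus ?thesis using aa eq_by_bits b by blast
qed

lemma adj_carrier: "(A::complex mat) \<in> carrier_mat m k \<Longrightarrow> mat_adjoint A \<in> carrier_mat k m"
  unfolding carrier_mat_def by (simp add: mat_adjoint_def)

lemma adj_dim[simp]: "dim_row (mat_adjoint A) = dim_col A" "dim_col (mat_adjoint A) = dim_row A"
  by (simp_all add: mat_adjoint_def)

lemma adj_index[simp]: "i < dim_col A \<Longrightarrow> j < dim_row A \<Longrightarrow> mat_adjoint A $$ (i, j) = cnj (A $$ (j, i))"
  by (simp add: mat_adjoint_def mat_of_rows_def)

lemma adj_mult: fixes A B :: "complex mat" assumes "A \<in> carrier_mat m k" "B \<in> carrier_mat k l"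
  shows "mat_adjoint (A * B) = mat_adjoint B * mat_adjoint A"
proof (rule eq_matI)
  fix i j assume "i < dim_row (mat_adjoint B * mat_adjoint A)" "j < dim_col (mat_adjoint B * mat_adjoint A)"
  hence i: "i < l" and j: "j < m" using assms by auto
  have "mat_adjoint (A * B) $$ (i, j) = cnj ((A * B) $$ (j, i))"
    using assms i j by simp
  also have "\<dots> = cnj (\<Sum>t<k. A $$ (j, t) * B $$ (t, i))"
    using assms i j by (simp add: scalar_prod_def atLeast0LessThan)
  also have "\<dots> = (\<Sum>t<k. cnj (B $$ (t, i)) * cnj (A $$ (j, t)))"
    by (simp add: mult.commute)
  also have "\<dots> = (mat_adjoint B * mat_adjoint A) $$ (i, j)"
    using assms i j by (simp add: scalar_prod_def atLeast0LessThan)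
  finally show "mat_adjoint (A * B) $$ (i, j) = (mat_adjoint B * mat_adjoint A) $$ (i, j)" .
qed (use assms in simp_all)

lemma adj_smult: "mat_adjoint (c \<cdot>\<^sub>m (A::complex mat)) = cnj c \<cdot>\<^sub>m mat_adjoint A"
  by (rule eq_matI) simp_all

lemma adj_one: "mat_adjoint (1\<^sub>m n :: complex mat) = 1\<^sub>m n"
  by (rule eq_matI) simp_all




definition unit_mat :: "nat \<Rightarrow> complex mat \<Rightarrow> bool" where
  "unit_mat n W \<longleftrightarrow> W \<in> carrier_mat (2 ^ n) (2 ^ n) \<and> W * mat_adjoint W = 1\<^sub>m (2 ^ n)
     \<and> mat_adjoint W * W = 1\<^sub>m (2 ^ n)"

lemma smult_smult_mat: "a \<cdot>\<^sub>m (b \<cdot>\<^sub>m (A :: 'a :: comm_ring_1 mat)) = (a * b) \<cdot>\<^sub>m A"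
  by (rule eq_matI) simp_all

lemma mult_sq[simp]: "A \<in> carrier_mat m m \<Longrightarrow> B \<in> carrier_mat m m \<Longrightarrow> A * B \<in> carrier_mat m m"
  by (rule mult_carrier_mat)

lemma assoc_sq: "A \<in> carrier_mat m m \<Longrightarrow> B \<in> carrier_mat m m \<Longrightarrow> C \<in> carrier_mat m m \<Longrightarrow> A * B * C = A * (B * C)"
  by (rule assoc_mult_mat)

lemma smult_one_mat[simp]: "1 \<cdot>\<^sub>m (A :: 'a :: comm_ring_1 mat) = A"
  by (rule eq_matI) simp_all

lemma smult_mult_smult:
  assumes "A \<in> carrier_mat m m" "B \<in> carrier_mat m m"
  shows "(a \<cdot>\<^sub>m A) * (b \<cdot>\<^sub>m (B :: 'a :: comm_ring_1 mat)) = (a * b) \<cdot>\<^sub>m (A * B)"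
proof -
  have "(a \<cdot>\<^sub>m A) * (b \<cdot>\<^sub>m B) = a \<cdot>\<^sub>m (A * (b \<cdot>\<^sub>m B))"
    by (rule mult_smult_assoc_mat) (use assms in auto)
  also have "\<dots> = a \<cdot>\<^sub>m (b \<cdot>\<^sub>m (A * B))" by (rule arg_cong[where f="\<lambda>X. a \<cdot>\<^sub>m X"], rule mult_smult_distrib) (use assms in auto)
  finally show ?thesis by (simp add: smult_smult_mat)
qed

lemma adj_adj: "mat_adjoint (mat_adjoint (A::complex mat)) = A"
  by (rule eq_matI) simp_all

lemma unitary_unit: "unitary_mat n U \<Longrightarrow> unit_mat n U"
  unfolding unitary_mat_def unit_mat_def
  using mat_mult_left_right_inverse adj_carrier by blast

lemma unit_carrier: "unit_mat n W \<Longrightarrow> W \<in> carrier_mat (2 ^ n) (2 ^ n)"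
  by (simp add: unit_mat_def)

lemma unit_adj: "unit_mat n W \<Longrightarrow> unit_mat n (mat_adjoint W)"
  unfolding unit_mat_def using adj_carrier adj_adj by metis

lemma unit_mult: assumes "unit_mat n A" "unit_mat n B" shows "unit_mat n (A * B)"
proof -
  have A: "A \<in> carrier_mat (2^n) (2^n)" and B: "B \<in> carrier_mat (2^n) (2^n)"
    using assms by (auto simp: unit_mat_def)
  have A': "mat_adjoint A \<in> carrier_mat (2^n) (2^n)" and B': "mat_adjoint B \<in> carrier_mat (2^n) (2^n)"
    using A B adj_carrier by auto
  have adj: "mat_adjoint (A * B) = mat_adjoint B * mat_adjoint A" using adj_mult A B by blast
  have 1: "A * B * (mat_adjoint B * mat_adjoint A) = 1\<^sub>m (2^n)"
  proof -
    have "A * B * (mat_adjoint B * mat_adjoint A) = A * ((B * mat_adjoint B) * mat_adjoint A)"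
      using A B A' B' by (simp add: assoc_sq)
    also have "\<dots> = 1\<^sub>m (2^n)" using assms A' by (simp add: unit_mat_def left_mult_one_mat[OF A'])
    finally show ?thesis .
  qed
  have 2: "(mat_adjoint B * mat_adjoint A) * (A * B) = 1\<^sub>m (2^n)"
  proof -
    have "(mat_adjoint B * mat_adjoint A) * (A * B) = mat_adjoint B * ((mat_adjoint A * A) * B)"
      using A B A' B' by (simp add: assoc_sq)
    also have "\<dots> = 1\<^sub>m (2^n)" using assms B by (simp add: unit_mat_def left_mult_one_mat[OF B])
    finally show ?thesis .
  qed
  show ?thesis unfolding unit_mat_def adj using 1 2 A B by auto
qed

lemma one_unit: "unit_mat n (1\<^sub>m (2 ^ n))"
  by (simp add: unit_mat_def adj_one)

lemma conj_mult:
  assumes W: "unit_mat n W" and A: "A \<in> carrier_mat (2^n) (2^n)" and B: "B \<in> carrier_mat (2^n) (2^n)"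
  shows "mat_adjoint W * (A * B) * W = (mat_adjoint W * A * W) * (mat_adjoint W * B * W)"
proof -
  have W1: "W \<in> carrier_mat (2^n) (2^n)" and W2: "mat_adjoint W \<in> carrier_mat (2^n) (2^n)"
    using W adj_carrier by (auto simp: unit_mat_def)
  have "(mat_adjoint W * A * W) * (mat_adjoint W * B * W) = mat_adjoint W * (A * ((W * mat_adjoint W) * B)) * W"
    using W1 W2 A B by (simp add: assoc_sq)
  also have "\<dots> = mat_adjoint W * (A * B) * W" using W B by (simp add: unit_mat_def)
  finally show ?thesis by simp
qed

lemma conj_one: "unit_mat n W \<Longrightarrow> mat_adjoint W * 1\<^sub>m (2^n) * W = 1\<^sub>m (2^n)"
  unfolding unit_mat_def using adj_carrier by (metis right_mult_one_mat)

lemma conj_smult: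
  assumes W: "unit_mat n W" and A: "A \<in> carrier_mat (2^n) (2^n)"
  shows "mat_adjoint W * (k \<cdot>\<^sub>m A) * W = k \<cdot>\<^sub>m (mat_adjoint W * A * W)"
proof -
  have W1: "W \<in> carrier_mat (2^n) (2^n)" and W2: "mat_adjoint W \<in> carrier_mat (2^n) (2^n)"
    using W adj_carrier by (auto simp: unit_mat_def)
  show ?thesis using W1 W2 A by (simp add: mult_smult_distrib[of _ "2^n" "2^n"] mult_smult_assoc_mat[of _ "2^n" "2^n"])
qed

lemma conj_conj:
  assumes U: "unit_mat n U" and V: "unit_mat n V" and A: "A \<in> carrier_mat (2^n) (2^n)"
  shows "mat_adjoint (U * mat_adjoint V) * A * (U * mat_adjoint V) = V * (mat_adjoint U * A * U) * mat_adjoint V"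
proof -
  have U1: "U \<in> carrier_mat (2^n) (2^n)" and U2: "mat_adjoint U \<in> carrier_mat (2^n) (2^n)"
    using U adj_carrier by (auto simp: unit_mat_def)
  have V1: "V \<in> carrier_mat (2^n) (2^n)" and V2: "mat_adjoint V \<in> carrier_mat (2^n) (2^n)"
    using V adj_carrier by (auto simp: unit_mat_def)
  have "mat_adjoint (U * mat_adjoint V) = V * mat_adjoint U"
    using adj_mult[OF U1 V2] adj_adj by simp
  thus ?thesis using U1 U2 V1 V2 A by (simp add: assoc_sq)
qed

section \<open>Conjugating Z-type Paulis\<close>

fun xf :: "(nat \<Rightarrow> nat) \<Rightarrow> nat \<Rightarrow> nat \<Rightarrow> nat" where
  "xf c x 0 = 0"
| "xf c x (Suc k) = xor (xf c x k) (if bit x k then c k else 0)"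

lemma xf_lt: "(\<forall>i<n. c i < 2 ^ n) \<Longrightarrow> k \<le> n \<Longrightarrow> xf c x k < 2 ^ n"
  by (induction k) (auto simp: xor_lt_pow)

lemma xf_zero[simp]: "xf c 0 k = 0"
  by (induction k) auto

lemma take_bit_Suc_xor: "take_bit (Suc k) (x::nat) = xor (take_bit k x) (if bit x k then 2 ^ k else 0)"
  by (intro bit_eqI) (auto simp: bit_take_bit_iff bit_xor_iff bit_exp_iff less_Suc_eq)

lemma Zq_pauli: "Zq n i = pauli n 0 (2 ^ i)" by (simp add: Zq_def)

lemma conj_pauli0_gen:
  assumes W: "unit_mat n W"
    and hyp: "\<forall>i<n. mat_adjoint W * Zq n i * W = ph i \<cdot>\<^sub>m pauli n (c i) (d i)"
    and ph: "\<forall>i<n. ph i \<noteq> 0" and c: "\<forall>i<n. c i < 2 ^ n"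
  shows "k \<le> n \<Longrightarrow> \<exists>\<theta>. \<theta> \<noteq> 0 \<and>
     mat_adjoint W * pauli n 0 (take_bit k x) * W = \<theta> \<cdot>\<^sub>m pauli n (xf c x k) (xf d x k)"
proof (induction k)
  case 0
  have "mat_adjoint W * pauli n 0 (take_bit 0 x) * W = 1 \<cdot>\<^sub>m pauli n (xf c x 0) (xf d x 0)"
    using conj_one[OF W] by (simp add: pauli_00)
  thus ?case by (intro exI[of _ 1]) simp
next
  case (Suc k)
  then obtain \<theta> where th: "\<theta> \<noteq> 0"
    and eq: "mat_adjoint W * pauli n 0 (take_bit k x) * W = \<theta> \<cdot>\<^sub>m pauli n (xf c x k) (xf d x k)" by auto
  have k: "k < n" using Suc by simp
  show ?case
  proof (cases "bit x k")
    case False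
    hence "take_bit (Suc k) x = take_bit k x" by (simp add: take_bit_Suc_xor)
    thus ?thesis using th eq False by (intro exI[of _ \<theta>]) simp
  next
    case True
    have "pauli n 0 (take_bit (Suc k) x) = pauli n 0 (take_bit k x) * Zq n k"
      using True by (simp add: take_bit_Suc_xor Zq_pauli pauli0_mult)
    hence "mat_adjoint W * pauli n 0 (take_bit (Suc k) x) * W =
        (\<theta> \<cdot>\<^sub>m pauli n (xf c x k) (xf d x k)) * (ph k \<cdot>\<^sub>m pauli n (c k) (d k))"
      using conj_mult[OF W, of "pauli n 0 (take_bit k x)" "Zq n k"] eq hyp k
      by (simp add: Zq_pauli)
    also have "\<dots> = (\<theta> * ph k) \<cdot>\<^sub>m (pauli n (xf c x k) (xf d x k) * pauli n (c k) (d k))"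
      by (rule smult_mult_smult) auto
    also have "\<dots> = (\<theta> * ph k * sg n (xf d x k) (c k)) \<cdot>\<^sub>m pauli n (xf c x (Suc k)) (xf d x (Suc k))"
      using pauli_mult[of "xf c x k" n "c k"] xf_lt[OF c] k c True by (simp add: smult_smult_mat)
    finally show ?thesis using th ph k True sg_sq
      by (intro exI[of _ "\<theta> * ph k * sg n (xf d x k) (c k)"]) (auto, metis mult_zero_left one_neq_zero)
  qed
qed

lemma conj_pauli0:
  assumes W: "unit_mat n W"
    and hyp: "\<forall>i<n. mat_adjoint W * Zq n i * W = ph i \<cdot>\<^sub>m pauli n (c i) (d i)"
    and ph: "\<forall>i<n. ph i \<noteq> 0" and c: "\<forall>i<n. c i < 2 ^ n"
    and x: "x < 2 ^ n"
  shows "\<exists>\<theta>. \<theta> \<noteq> 0 \<and> mat_adjoint W * pauli n 0 x * W = \<theta> \<cdot>\<^sub>m pauli n (xf c x n) (xf d x n)"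
  using conj_pauli0_gen[OF W hyp ph c, of n x] x by (simp add: take_bit_nat_eq_self)




lemma char_sum_group:
  fixes f :: "nat \<Rightarrow> complex"
  assumes fin: "finite G" and cl: "\<forall>x\<in>G. \<forall>y\<in>G. xor x y \<in> G"
    and hom: "\<forall>x\<in>G. \<forall>y\<in>G. f (xor x y) = f x * f y"
  shows "(\<Sum>x\<in>G. f x) = (if \<forall>x\<in>G. f x = 1 then of_nat (card G) else 0)"
proof (cases "\<forall>x\<in>G. f x = 1")
  case True thus ?thesis by simp
next
  case False
  then obtain y where y: "y \<in> G" "f y \<noteq> 1" by auto
  have bij: "bij_betw (\<lambda>x. xor x y) G G"
    by (rule bij_betw_byWitness[where f'="\<lambda>x. xor x y"]) (use cl y in \<open>auto simp: xor.assoc\<close>)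
  have "(\<Sum>x\<in>G. f x) = (\<Sum>x\<in>G. f (xor x y))"
    using sum.reindex_bij_betw[OF bij, of f] by simp
  also have "\<dots> = (\<Sum>x\<in>G. f x * f y)" using hom y by (intro sum.cong) auto
  also have "\<dots> = f y * (\<Sum>x\<in>G. f x)" by (simp add: sum_distrib_left mult.commute)
  finally have "(1 - f y) * (\<Sum>x\<in>G. f x) = 0" by (simp add: algebra_simps)
  hence "(\<Sum>x\<in>G. f x) = 0" using y by simp
  thus ?thesis using False by (subst if_not_P) auto
qed

section \<open>Outcome distribution for a unitary with Pauli Z-tableau\<close>

locale tabl =
  fixes n :: nat and W :: "complex mat" and ph :: "nat \<Rightarrow> complex" and c d :: "nat \<Rightarrow> nat"
  assumes W: "unit_mat n W"
    and hyp: "\<forall>i<n. mat_adjoint W * Zq n i * W = ph i \<cdot>\<^sub>m pauli n (c i) (d i)"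
    and ph: "\<forall>i<n. ph i \<noteq> 0" and c: "\<forall>i<n. c i < 2 ^ n" and d: "\<forall>i<n. d i < 2 ^ n"
begin

lemma cnj_sq: "cnj z * z = complex_of_real ((cmod z)\<^sup>2)"
  by (simp only: complex_norm_square mult.commute)

definition Q where "Q x = mat_adjoint W * pauli n 0 x * W"
definition th where "th x = Q x $$ (0, 0)"
definition K where "K = {x. x < 2 ^ n \<and> th x \<noteq> 0}"
definition pr where "pr b = (cmod (W $$ (b, 0)))\<^sup>2"
definition T where "T = {b. b < 2 ^ n \<and> (\<forall>x\<in>K. sg n b x * th x = 1)}"

lemma Wc: "W \<in> carrier_mat (2^n) (2^n)" and Wa: "mat_adjoint W \<in> carrier_mat (2^n) (2^n)"
  using W adj_carrier by (auto simp: unit_mat_def)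

lemma Q_form: "x < 2 ^ n \<Longrightarrow> \<exists>\<theta>. \<theta> \<noteq> 0 \<and> Q x = \<theta> \<cdot>\<^sub>m pauli n (xf c x n) (xf d x n)"
  unfolding Q_def using conj_pauli0[OF W hyp ph c] by blast

lemma th_formula: "th x = (\<Sum>s<2^n. complex_of_real (pr s) * sg n x s)"
proof -
  have N: "0 < (2::nat) ^ n" by simp
  have row: "(mat_adjoint W * pauli n 0 x) $$ (0, t) = cnj (W $$ (t, 0)) * sg n x t" if t: "t < 2 ^ n" for t
  proof -
    have "(mat_adjoint W * pauli n 0 x) $$ (0, t) = (\<Sum>s<2^n. mat_adjoint W $$ (0, s) * pauli n 0 x $$ (s, t))"
      using Wc Wa t N by (simp add: scalar_prod_def atLeast0LessThan[symmetric])
    also have "\<dots> = (\<Sum>s<2^n. if s = t then mat_adjoint W $$ (0, s) * sg n x t else 0)"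
      using t by (intro sum.cong) (auto simp: pauli_index)
    also have "\<dots> = cnj (W $$ (t, 0)) * sg n x t"
      using t Wc N by (simp add: sum.delta)
    finally show ?thesis .
  qed
  have "th x = (\<Sum>t<2^n. (mat_adjoint W * pauli n 0 x) $$ (0, t) * W $$ (t, 0))"
    unfolding th_def Q_def using Wc Wa N by (simp add: scalar_prod_def atLeast0LessThan[symmetric])
  also have "\<dots> = (\<Sum>t<2^n. complex_of_real (pr t) * sg n x t)"
    by (intro sum.cong) (auto simp: row pr_def cnj_sq)
  finally show ?thesis .
qed

lemma sum_pr: "(\<Sum>s<2^n. pr s) = 1"
proof -
  have N: "0 < (2::nat) ^ n" by simp
  have "(1::complex) = (mat_adjoint W * W) $$ (0, 0)" using W N by (simp add: unit_mat_def)
  also have "\<dots> = (\<Sum>t<2^n. cnj (W $$ (t, 0)) * W $$ (t, 0))"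
    using Wc Wa N by (simp add: scalar_prod_def atLeast0LessThan[symmetric])
  also have "\<dots> = (\<Sum>t<2^n. complex_of_real (pr t))"
    by (intro sum.cong) (auto simp: pr_def cnj_sq)
  finally show ?thesis by (metis of_real_eq_1_iff of_real_sum)
qed

lemma pr_fourier: assumes b: "b < 2 ^ n"
  shows "of_nat (2 ^ n) * complex_of_real (pr b) = (\<Sum>x<2^n. sg n b x * th x)"
proof -
  have "(\<Sum>x<2^n. sg n b x * th x) = (\<Sum>x<2^n. \<Sum>s<2^n. complex_of_real (pr s) * (sg n x b * sg n x s))"
    by (simp add: th_formula sum_distrib_left sg_comm mult.commute mult.left_commute)
  also have "\<dots> = (\<Sum>s<2^n. complex_of_real (pr s) * (\<Sum>x<2^n. sg n x (xor b s)))"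
    by (subst sum.swap) (simp add: sum_distrib_left sg_xor_right)
  also have "\<dots> = (\<Sum>s<2^n. if s = b then complex_of_real (pr s) * of_nat (2 ^ n) else 0)"
  proof (intro sum.cong refl)
    fix s :: nat assume s: "s \<in> {..<2^n}"
    have "(\<forall>j<n. \<not> bit (xor b s) j) \<longleftrightarrow> s = b"
    proof
      assume "\<forall>j<n. \<not> bit (xor b s) j"
      thus "s = b" using eq_by_bits[of s n b] s b by (auto simp: bit_xor_iff)
    qed auto
    thus "complex_of_real (pr s) * (\<Sum>x<2^n. sg n x (xor b s)) =
      (if s = b then complex_of_real (pr s) * of_nat (2 ^ n) else 0)"
      by (simp add: char_sum)
  qed
  also have "\<dots> = of_nat (2 ^ n) * complex_of_real (pr b)" using b by (simp add: sum.delta)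
  finally show ?thesis by simp
qed

lemma th_zero: "x < 2 ^ n \<Longrightarrow> th x \<noteq> 0 \<longleftrightarrow> xf c x n = 0"
proof -
  assume x: "x < 2 ^ n"
  then obtain \<theta> where "\<theta> \<noteq> 0" "Q x = \<theta> \<cdot>\<^sub>m pauli n (xf c x n) (xf d x n)" using Q_form by blast
  thus ?thesis by (simp add: th_def pauli_entry00)
qed

lemma K_alt: "K = {x. x < 2 ^ n \<and> xf c x n = 0}"
  unfolding K_def using th_zero by blast

lemma Q_K: "x \<in> K \<Longrightarrow> Q x = th x \<cdot>\<^sub>m pauli n 0 (xf d x n)"
proof -
  assume x: "x \<in> K"
  hence x': "x < 2 ^ n" and z: "xf c x n = 0" using K_alt by auto
  then obtain \<theta> where "\<theta> \<noteq> 0" "Q x = \<theta> \<cdot>\<^sub>m pauli n (xf c x n) (xf d x n)" using Q_form by blast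
  thus ?thesis using z by (simp add: th_def pauli_entry00)
qed

lemma Q_mult: "Q x * Q y = Q (xor x y)"
  unfolding Q_def using conj_mult[OF W, of "pauli n 0 x" "pauli n 0 y"] by (simp add: pauli0_mult)

lemma th_hom: assumes "x \<in> K" "y \<in> K" shows "th (xor x y) = th x * th y"
proof -
  have "Q (xor x y) = (th x * th y) \<cdot>\<^sub>m (pauli n 0 (xf d x n) * pauli n 0 (xf d y n))"
    using Q_mult[of x y] Q_K[OF assms(1)] Q_K[OF assms(2)] smult_mult_smult[OF pauli_carrier pauli_carrier] by metis
  also have "\<dots> = (th x * th y) \<cdot>\<^sub>m pauli n 0 (xor (xf d x n) (xf d y n))" by (simp add: pauli0_mult)
  finally show ?thesis by (simp add: th_def pauli_entry00)
qed

lemma K_closed: assumes "x \<in> K" "y \<in> K" shows "xor x y \<in> K"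
  using th_hom[OF assms] assms by (auto simp: K_def xor_lt_pow)

lemma th_0: "th 0 = 1"
  unfolding th_def Q_def using conj_one[OF W] by (simp add: pauli_00)

lemma K_0: "0 \<in> K" by (simp add: K_def th_0)

lemma finite_K: "finite K" by (simp add: K_def)

lemma pr_values: assumes b: "b < 2 ^ n"
  shows "of_nat (2 ^ n) * complex_of_real (pr b) = (if b \<in> T then of_nat (card K) else 0)"
proof -
  have "of_nat (2 ^ n) * complex_of_real (pr b) = (\<Sum>x\<in>K. sg n b x * th x)"
    unfolding pr_fourier[OF b] by (rule sum.mono_neutral_right) (auto simp: K_def)
  also have "\<dots> = (if \<forall>x\<in>K. sg n b x * th x = 1 then of_nat (card K) else 0)"
    by (rule char_sum_group[OF finite_K]) (auto simp: K_closed th_hom sg_xor_right)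
  finally show ?thesis using b by (simp add: T_def)
qed

lemma pr_T: "b < 2 ^ n \<Longrightarrow> pr b = (if b \<in> T then card K / 2 ^ n else 0)"
proof -
  assume b: "b < 2 ^ n"
  have "complex_of_real (2 ^ n * pr b) = complex_of_real (if b \<in> T then real (card K) else 0)"
    using pr_values[OF b] by simp
  hence "2 ^ n * pr b = (if b \<in> T then real (card K) else 0)" using of_real_eq_iff by blast
  thus ?thesis by (auto simp: field_simps)
qed

lemma card_TK: "card T * card K = 2 ^ n"
proof -
  have T: "T \<subseteq> {..<2^n}" by (auto simp: T_def)
  have "1 = (\<Sum>s<2^n. pr s)" using sum_pr by simp
  also have "\<dots> = (\<Sum>s<2^n. if s \<in> T then card K / 2 ^ n else 0)" by (intro sum.cong) (auto simp: pr_T)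
  also have "\<dots> = card T * (card K / 2 ^ n)" using T by (simp add: sum.If_cases Int_absorb1)
  finally have "real (card T * card K) = real (2 ^ n)" by (simp add: field_simps)
  thus ?thesis by (metis of_nat_eq_iff)
qed

lemma T_ne: "T \<noteq> {}" using card_TK by (metis card.empty mult_is_0 power_eq_0_iff zero_neq_numeral)

lemma max_pr: "Max (pr ` {..<2^n}) = card K / 2 ^ n"
proof (rule Max_eqI)
  show "finite (pr ` {..<2^n})" by simp
  show "y \<le> card K / 2 ^ n" if "y \<in> pr ` {..<2^n}" for y using that by (auto simp: pr_T)
  obtain b where "b \<in> T" using T_ne by auto
  hence "b < 2 ^ n" "pr b = card K / 2 ^ n" by (auto simp: pr_T T_def)
  thus "card K / 2 ^ n \<in> pr ` {..<2^n}" by force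
qed

lemma card_pr_pos: "card {b. b < 2 ^ n \<and> pr b = card K / 2 ^ n} = card T"
proof -
  have "card K > 0" using finite_K K_0 card_gt_0_iff by blast
  hence "{b. b < 2 ^ n \<and> pr b = card K / 2 ^ n} = T" by (auto simp: pr_T T_def split: if_splits)
  thus ?thesis by simp
qed

lemma card_pr_zero: "card {b. b < 2 ^ n \<and> pr b = 0} = 2 ^ n - card T"
proof -
  have "card K > 0" using finite_K K_0 card_gt_0_iff by blast
  hence "{b. b < 2 ^ n \<and> pr b = 0} = {..<2^n} - T" by (auto simp: pr_T T_def split: if_splits)
  moreover have "T \<subseteq> {..<2^n}" by (auto simp: T_def)
  ultimately show ?thesis by (simp add: card_Diff_subset finite_subset)
qed

end




section \<open>Spans over finite fields\<close>

context vec_space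
begin

lemma lin_indpt_empty: "lin_indpt {}"
  unfolding lin_dep_def by auto

lemma card_span_indpt:
  assumes fin: "finite S" and S: "S \<subseteq> carrier_vec n" and li: "lin_indpt S"
  shows "card (span S) = card (UNIV :: 'a set) ^ card S"
proof -
  have li_eq: "lincomb a S = lincomb b S" if "\<forall>u\<in>S. a u = b u" for a b
  proof (rule eq_vecI)
    show "dim_vec (lincomb a S) = dim_vec (lincomb b S)" using lincomb_dim[OF fin S] by simp
    fix i assume "i < dim_vec (lincomb b S)"
    hence i: "i < n" using lincomb_dim[OF fin S] by simp
    show "lincomb a S $ i = lincomb b S $ i"
      unfolding lincomb_index[OF i S] using that by (intro sum.cong) auto
  qed
  have sp: "span S = (\<lambda>a. lincomb a S) ` (S \<rightarrow>\<^sub>E UNIV)"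
  proof
    show "span S \<subseteq> (\<lambda>a. lincomb a S) ` (S \<rightarrow>\<^sub>E UNIV)"
    proof
      fix v assume "v \<in> span S"
      then obtain a where "lincomb a S = v" using finite_in_span[OF fin S] by auto
      moreover have "lincomb (restrict a S) S = lincomb a S" by (rule li_eq) auto
      moreover have "restrict a S \<in> S \<rightarrow>\<^sub>E UNIV" by auto
      ultimately show "v \<in> (\<lambda>a. lincomb a S) ` (S \<rightarrow>\<^sub>E UNIV)" by (metis (no_types, lifting) image_eqI)
    qed
    show "(\<lambda>a. lincomb a S) ` (S \<rightarrow>\<^sub>E UNIV) \<subseteq> span S"
      using finite_span[OF fin S] by auto
  qed
  have inj: "inj_on (\<lambda>a. lincomb a S) (S \<rightarrow>\<^sub>E UNIV)"
  proof (rule inj_onI)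
    fix a b assume a: "a \<in> S \<rightarrow>\<^sub>E UNIV" and b: "b \<in> S \<rightarrow>\<^sub>E UNIV" and eq: "lincomb a S = lincomb b S"
    have z: "lincomb (\<lambda>u. a u - b u) S = 0\<^sub>v n"
    proof (rule eq_vecI)
      show "dim_vec (lincomb (\<lambda>u. a u - b u) S) = dim_vec (0\<^sub>v n)" using lincomb_dim[OF fin S] by simp
      fix i assume "i < dim_vec (0\<^sub>v n)"
      hence i: "i < n" by simp
      have "lincomb (\<lambda>u. a u - b u) S $ i = lincomb a S $ i - lincomb b S $ i"
        unfolding lincomb_index[OF i S] by (simp add: sum_subtractf algebra_simps)
      thus "lincomb (\<lambda>u. a u - b u) S $ i = 0\<^sub>v n $ i" using eq i by simp
    qed
    have "(\<lambda>u. a u - b u) \<in> S \<rightarrow> {0}"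
      using not_lindepD[OF li fin subset_refl _ z] by simp
    hence "\<forall>u\<in>S. a u = b u" by auto
    thus "a = b" using a b by (intro PiE_ext) auto
  qed
  have "card (span S) = card (S \<rightarrow>\<^sub>E (UNIV :: 'a set))" unfolding sp using card_image[OF inj] .
  also have "\<dots> = card (UNIV :: 'a set) ^ card S" by (simp add: card_PiE[OF fin])
  finally show ?thesis .
qed

lemma span_maximal:
  assumes S0: "S0 \<subseteq> carrier_vec n" and fin: "finite S0"
    and max: "maximal U (\<lambda>T. T \<subseteq> S0 \<and> lin_indpt T)"
  shows "span U = span S0"
proof (rule ccontr)
  assume ne: "span U \<noteq> span S0"
  have "lin_indpt U" "U \<subseteq> S0" by (metis max maximal_def)+
  have "span U \<subseteq> span S0" using span_is_monotone \<open>U\<subseteq>S0\<close> by metis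
  then have "\<not> S0 \<subseteq> span U" by (meson \<open>U \<subseteq> S0\<close> ne S0 span_is_submodule
      span_is_subset subset_antisym subset_trans)
  then obtain s where "s\<in>S0" "s \<notin> span U" by blast
  then have "lin_indpt (U\<union>{s})" using lindep_span
    by (meson \<open>U \<subseteq> S0\<close> \<open>lin_indpt U\<close> S0 lin_dep_iff_in_span rev_subsetD span_mem subset_trans)
  have "s\<notin>U" using \<open>U \<subseteq> S0\<close> \<open>s \<notin> span U\<close> S0 span_mem by auto
  then have "(U\<union>{s}) \<subseteq> S0 \<and> lin_indpt (U\<union>{s})" using \<open>U \<subseteq> S0\<close> \<open>lin_indpt (U \<union> {s})\<close> \<open>s \<in> S0\<close> by auto
  then have "\<not>maximal U (\<lambda>T. T \<subseteq> S0 \<and> lin_indpt T)"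
    unfolding maximal_def using Un_subset_iff \<open>s \<notin> U\<close> insert_subset order_refl by auto
  then show False using max by metis
qed

lemma card_col_space:
  assumes A: "A \<in> carrier_mat n nc"
  shows "card (span (set (cols A))) = card (UNIV :: 'a set) ^ rank A"
proof -
  obtain U where U: "finite U" "maximal U (\<lambda>T. T \<subseteq> set (cols A) \<and> lin_indpt T)"
    using maximal_exists_superset[of "set (cols A)" "\<lambda>T. T \<subseteq> set (cols A) \<and> lin_indpt T" "{}"]
      lin_indpt_empty by auto
  have cs: "set (cols A) \<subseteq> carrier_vec n" using A cols_dim by blast
  have r: "rank A = card U" using rank_card_indpt[OF A U(2)] .
  have sp: "span U = span (set (cols A))" using span_maximal[OF cs _ U(2)] by simp
  have "U \<subseteq> set (cols A)" "lin_indpt U" using U(2) by (auto simp: maximal_def)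
  hence "card (span U) = card (UNIV :: 'a set) ^ card U" using card_span_indpt[OF U(1)] cs by blast
  thus ?thesis using sp r by simp
qed

end




section \<open>Bit strings as vectors over GF(2)\<close>

lemma mask_of_Suc: "mask_of (Suc n) f = mask_of n f + (if f n then 2 ^ n else 0)"
  by (simp add: mask_of_def)

lemma mask_of_lt: "mask_of n f < 2 ^ n"
proof (induction n)
  case 0 thus ?case by (simp add: mask_of_def)
next
  case (Suc n) thus ?case by (simp add: mask_of_Suc)
qed

lemma bit_mask_of: "bit (mask_of n f) j \<longleftrightarrow> j < n \<and> f j"
proof (induction n)
  case 0 thus ?case by (simp add: mask_of_def)
next
  case (Suc n)
  show ?case
  proof (cases "f n")
    case True
    have d: "\<And>k. \<not> bit (mask_of n f) k \<or> \<not> bit ((2::nat) ^ n) k"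
      using mask_of_lt[of n f] by (auto simp: bit_exp_iff dest: bit_lt_pow)
    show ?thesis using True Suc.IH by (auto simp: mask_of_Suc bit_disjunctive_add_iff[OF d] bit_exp_iff less_Suc_eq)
  next
    case False thus ?thesis using Suc.IH by (auto simp: mask_of_Suc less_Suc_eq)
  qed
qed

definition vx :: "nat \<Rightarrow> nat \<Rightarrow> bit vec" where "vx n x = vec n (\<lambda>i. of_bool (bit x i))"
definition vinv :: "nat \<Rightarrow> bit vec \<Rightarrow> nat" where "vinv n y = mask_of n (\<lambda>i. y $ i = 1)"

lemma vx_carrier[simp]: "vx n x \<in> carrier_vec n" by (simp add: vx_def)
lemma vx_dim[simp]: "dim_vec (vx n x) = n" by (simp add: vx_def)
lemma vx_index[simp]: "i < n \<Longrightarrow> vx n x $ i = of_bool (bit x i)" by (simp add: vx_def)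

lemma vx_vinv: "y \<in> carrier_vec n \<Longrightarrow> vx n (vinv n y) = y"
  by (intro eq_vecI) (auto simp: vinv_def bit_mask_of)

lemma vinv_lt: "vinv n y < 2 ^ n" by (simp add: vinv_def mask_of_lt)

lemma vinv_vx: "x < 2 ^ n \<Longrightarrow> vinv n (vx n x) = x"
  by (rule eq_by_bits[of _ n]) (auto simp: vinv_def bit_mask_of mask_of_lt)

lemma vx_bij: "bij_betw (vx n) {..<2 ^ n} (carrier_vec n)"
  by (rule bij_betw_byWitness[where f'="vinv n"]) (auto simp: vinv_vx vx_vinv vinv_lt)

lemma finite_carrier_bit: "finite (carrier_vec n :: bit vec set)"
  using vx_bij[of n] bij_betw_finite by blast

lemma vx_zero: "vx n 0 = 0\<^sub>v n" by (intro eq_vecI) auto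

definition E :: "bit \<Rightarrow> complex" where "E b = (if b = 0 then 1 else -1)"

lemma E_add: "E (a + b) = E a * E b"
  by (cases a; cases b) (simp_all add: E_def)

lemma E_sum: "E (sum f A) = (\<Prod>i\<in>A. E (f i))"
proof (induction A rule: infinite_finite_induct)
  case (infinite A) thus ?case by (simp add: E_def)
next
  case empty thus ?case by (simp add: E_def)
next
  case (insert x F) thus ?case by (simp only: sum.insert[OF insert(1,2)] prod.insert[OF insert(1,2)] E_add)
qed

lemma prod_sign: "finite A \<Longrightarrow> (\<Prod>i\<in>A. if P i then -1 else 1) = ((-1::complex) ^ card {i\<in>A. P i})"
proof (induction A rule: finite_induct)
  case empty thus ?case by simp
next
  case (insert x F)
  have "{i \<in> insert x F. P i} = (if P x then insert x {i\<in>F. P i} else {i\<in>F. P i})" by auto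
  thus ?case using insert by auto
qed

lemma E_ob: "E (of_bool a * of_bool b) = (if a \<and> b then -1 else 1)"
  by (cases a; cases b) (simp_all add: E_def)

lemma E_dot_vx: "E (vx n t \<bullet> vx n x) = sg n t x"
proof -
  have "vx n t \<bullet> vx n x = (\<Sum>i\<in>{0..<n}. of_bool (bit t i) * of_bool (bit x i))"
    unfolding scalar_prod_def by (intro sum.cong) auto
  hence "E (vx n t \<bullet> vx n x) = (\<Prod>i\<in>{0..<n}. if bit t i \<and> bit x i then -1 else 1)"
    by (simp only: E_sum E_ob)
  also have "\<dots> = (-1) ^ card {i\<in>{0..<n}. bit t i \<and> bit x i}" by (rule prod_sign) simp
  also have "{i\<in>{0..<n}. bit t i \<and> bit x i} = {j. j < n \<and> bit t j \<and> bit x j}" by auto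
  finally show ?thesis by (simp add: sg_def)
qed

lemma char_sum_vec: assumes v: "v \<in> carrier_vec n"
  shows "(\<Sum>y\<in>carrier_vec n. E (v \<bullet> y)) = (if v = 0\<^sub>v n then 2 ^ n else 0)"
proof -
  define t where "t = vinv n v"
  have t: "t < 2 ^ n" and vt: "v = vx n t" using vx_vinv[OF v] vinv_lt by (auto simp: t_def)
  have "(\<Sum>y\<in>carrier_vec n. E (v \<bullet> y)) = (\<Sum>x<2^n. E (v \<bullet> vx n x))"
    using sum.reindex_bij_betw[OF vx_bij, of "\<lambda>y. E (v \<bullet> y)"] by simp
  also have "\<dots> = (\<Sum>x<2^n. sg n x t)" by (simp add: vt E_dot_vx sg_comm)
  also have "\<dots> = (if \<forall>j<n. \<not> bit t j then 2 ^ n else 0)" by (rule char_sum)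
  also have "(\<forall>j<n. \<not> bit t j) \<longleftrightarrow> v = 0\<^sub>v n"
  proof
    assume "\<forall>j<n. \<not> bit t j"
    hence "t = 0" using eq_by_bits[OF t, of 0] by simp
    thus "v = 0\<^sub>v n" by (simp add: vt vx_zero)
  next
    assume "v = 0\<^sub>v n"
    hence "t = 0" using vinv_vx[of 0 n] by (simp add: t_def vx_zero)
    thus "\<forall>j<n. \<not> bit t j" by simp
  qed
  finally show ?thesis .
qed

lemma char_sum_gen:
  fixes f :: "'b \<Rightarrow> complex"
  assumes fin: "finite G" and cl: "\<forall>x\<in>G. \<forall>y\<in>G. op x y \<in> G"
    and inv: "\<forall>x\<in>G. \<forall>y\<in>G. op (op x y) y = x"
    and hom: "\<forall>x\<in>G. \<forall>y\<in>G. f (op x y) = f x * f y"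
  shows "(\<Sum>x\<in>G. f x) = (if \<forall>x\<in>G. f x = 1 then of_nat (card G) else 0)"
proof (cases "\<forall>x\<in>G. f x = 1")
  case True thus ?thesis by simp
next
  case False
  then obtain y where y: "y \<in> G" "f y \<noteq> 1" by auto
  have bij: "bij_betw (\<lambda>x. op x y) G G"
    by (rule bij_betw_byWitness[where f'="\<lambda>x. op x y"]) (use cl inv y in auto)
  have "(\<Sum>x\<in>G. f x) = (\<Sum>x\<in>G. f (op x y))"
    using sum.reindex_bij_betw[OF bij, of f] by simp
  also have "\<dots> = (\<Sum>x\<in>G. f x * f y)" using hom y by (intro sum.cong) auto
  also have "\<dots> = f y * (\<Sum>x\<in>G. f x)" by (simp add: sum_distrib_left mult.commute)
  finally have "(1 - f y) * (\<Sum>x\<in>G. f x) = 0" by (simp add: algebra_simps)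
  hence "(\<Sum>x\<in>G. f x) = 0" using y by simp
  thus ?thesis using False by (subst if_not_P) auto
qed

lemma E_one: "E b = 1 \<longleftrightarrow> b = 0" by (cases b) (simp_all add: E_def)

lemma orth_count:
  fixes V :: "bit vec set"
  assumes V: "V \<subseteq> carrier_vec n" and z: "0\<^sub>v n \<in> V" and cl: "\<forall>x\<in>V. \<forall>y\<in>V. x + y \<in> V"
  shows "card V * card {y \<in> carrier_vec n. \<forall>v\<in>V. v \<bullet> y = 0} = 2 ^ n"
proof -
  let ?C = "carrier_vec n :: bit vec set"
  let ?K = "{y \<in> carrier_vec n. \<forall>v\<in>V. v \<bullet> y = 0}"
  have finV: "finite V" using finite_subset[OF V finite_carrier_bit] .
  have inner: "(\<Sum>v\<in>V. E (v \<bullet> y)) = (if y \<in> ?K then of_nat (card V) else 0)" if y: "y \<in> ?C" for y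
  proof -
    have "(\<Sum>v\<in>V. E (v \<bullet> y)) = (if \<forall>v\<in>V. E (v \<bullet> y) = 1 then of_nat (card V) else 0)"
    proof (rule char_sum_gen[OF finV cl])
      show "\<forall>x\<in>V. \<forall>w\<in>V. x + w + w = x"
      proof (intro ballI)
        fix x w assume "x \<in> V" "w \<in> V"
        hence x: "x \<in> carrier_vec n" and w: "w \<in> carrier_vec n" using V by auto
        show "x + w + w = x" by (rule eq_vecI) (use x w in auto)
      qed
      show "\<forall>x\<in>V. \<forall>w\<in>V. E ((x + w) \<bullet> y) = E (x \<bullet> y) * E (w \<bullet> y)"
      proof (intro ballI)
        fix x w assume "x \<in> V" "w \<in> V"
        hence x: "x \<in> carrier_vec n" and w: "w \<in> carrier_vec n" using V by auto
        have "(x + w) \<bullet> y = x \<bullet> y + w \<bullet> y" by (rule add_scalar_prod_distrib[OF x w y])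
        thus "E ((x + w) \<bullet> y) = E (x \<bullet> y) * E (w \<bullet> y)" by (simp only: E_add)
      qed
    qed
    thus ?thesis using y by (simp add: E_one)
  qed
  have "(\<Sum>y\<in>?C. \<Sum>v\<in>V. E (v \<bullet> y)) = (\<Sum>v\<in>V. \<Sum>y\<in>?C. E (v \<bullet> y))" by (rule sum.swap)
  also have "\<dots> = (\<Sum>v\<in>V. if v = 0\<^sub>v n then 2 ^ n else 0)"
  proof (rule sum.cong[OF refl])
    fix v assume "v \<in> V"
    thus "(\<Sum>y\<in>?C. E (v \<bullet> y)) = (if v = 0\<^sub>v n then 2 ^ n else 0)"
      using V by (intro char_sum_vec) auto
  qed
  also have "\<dots> = 2 ^ n" using finV z by (simp add: sum.delta)
  finally have A: "(\<Sum>y\<in>?C. \<Sum>v\<in>V. E (v \<bullet> y)) = 2 ^ n" .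
  have "(\<Sum>y\<in>?C. \<Sum>v\<in>V. E (v \<bullet> y)) = (\<Sum>y\<in>?C. if y \<in> ?K then of_nat (card V) else 0)"
    by (intro sum.cong) (auto simp: inner)
  also have "\<dots> = of_nat (card V) * of_nat (card ?K)"
    using finite_carrier_bit[of n] by (simp add: sum.If_cases Int_absorb1 mult.commute Int_def)
  finally have "complex_of_nat (card V * card ?K) = of_nat (2 ^ n)" using A by simp
  thus ?thesis using of_nat_eq_iff by blast
qed




lemma of_bool_neq_bit: "(of_bool (P \<noteq> Q) :: bit) = of_bool P + of_bool Q"
  by (cases P; cases Q) simp_all

lemma xf_bit: "(of_bool (bit (xf c x k) j) :: bit) = (\<Sum>i<k. of_bool (bit x i) * of_bool (bit (c i) j))"
proof (induction k)
  case 0 thus ?case by simp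
next
  case (Suc k)
  have "(of_bool (bit (xf c x (Suc k)) j) :: bit) = of_bool (bit (xf c x k) j) + of_bool (bit x k) * of_bool (bit (c k) j)"
    by (simp only: xf.simps bit_xor_iff of_bool_neq_bit) (cases "bit x k"; simp)
  thus ?case using Suc.IH by simp
qed

lemma bit_cases_of_bool: "(b :: bit) = of_bool (b = 1)"
  by (cases b) simp_all

lemma card_UNIV_bit: "card (UNIV :: bit set) = 2"
proof -
  have "(UNIV :: bit set) = {0, 1}" by (auto intro: bit.exhaust)
  show ?thesis unfolding \<open>(UNIV :: bit set) = {0, 1}\<close> by simp
qed

lemma rank_count:
  fixes C :: "bit mat"
  assumes C: "C \<in> carrier_mat n n"
  defines "c \<equiv> \<lambda>i. mask_of n (\<lambda>j. C $$ (i, j) = 1)"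
  shows "card {x. x < 2 ^ n \<and> xf c x n = 0} * 2 ^ rank_F2 C = 2 ^ n"
proof -
  interpret vs: vec_space "TYPE(bit)" n .
  let ?S = "set (cols C)"
  let ?V = "vs.span ?S"
  let ?Kv = "{y \<in> carrier_vec n. \<forall>v\<in>?V. v \<bullet> y = 0}"
  have S: "?S \<subseteq> carrier_vec n" using C cols_dim by blast
  have finS: "finite ?S" by simp
  have clt: "\<forall>i<n. c i < 2 ^ n" by (simp add: c_def mask_of_lt)
  have colx: "col C j \<bullet> vx n x = (\<Sum>i<n. of_bool (bit x i) * of_bool (bit (c i) j))" if j: "j < n" for j x
  proof -
    have "col C j \<bullet> vx n x = (\<Sum>i\<in>{0..<n}. C $$ (i, j) * of_bool (bit x i))"
      unfolding scalar_prod_def using C j by (intro sum.cong) auto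
    also have "\<dots> = (\<Sum>i<n. of_bool (bit x i) * of_bool (bit (c i) j))"
      unfolding lessThan_atLeast0 using j
      by (intro sum.cong refl) (simp add: c_def bit_mask_of mult.commute, metis bit_cases_of_bool)
    finally show ?thesis .
  qed
  have xf0: "xf c x n = 0 \<longleftrightarrow> (\<forall>j<n. col C j \<bullet> vx n x = 0)" for x
  proof -
    have lt: "xf c x n < 2 ^ n" using xf_lt[OF clt] by simp
    have "xf c x n = 0 \<longleftrightarrow> (\<forall>j<n. \<not> bit (xf c x n) j)"
      using eq_by_bits[OF lt, of 0] by auto
    also have "\<dots> \<longleftrightarrow> (\<forall>j<n. col C j \<bullet> vx n x = 0)"
    proof (intro all_cong1 imp_cong refl)
      fix j assume j: "j < n"
      have "(\<not> bit (xf c x n) j) \<longleftrightarrow> (of_bool (bit (xf c x n) j) :: bit) = 0" by simp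
      also have "\<dots> \<longleftrightarrow> col C j \<bullet> vx n x = 0" by (simp only: xf_bit colx[OF j])
      finally show "(\<not> bit (xf c x n) j) \<longleftrightarrow> col C j \<bullet> vx n x = 0" .
    qed
    finally show ?thesis .
  qed
  have Kv: "?Kv = {y \<in> carrier_vec n. \<forall>j<n. col C j \<bullet> y = 0}"
  proof (intro Collect_cong conj_cong refl iffI allI impI ballI)
    fix y assume y: "y \<in> carrier_vec n" and h: "\<forall>v\<in>?V. v \<bullet> y = 0"
    fix j assume j: "j < n"
    have "col C j \<in> ?S" using C j by (simp add: cols_def)
    hence "col C j \<in> ?V" using vs.in_own_span[OF S] by blast
    thus "col C j \<bullet> y = 0" using h by blast
  next
    fix y v assume y: "y \<in> carrier_vec n" and h: "\<forall>j<n. col C j \<bullet> y = 0" and v: "v \<in> ?V"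
    obtain a where a: "vs.lincomb a ?S = v" using vs.finite_in_span[OF finS S v] by auto
    have f: "(\<lambda>u. a u \<cdot>\<^sub>v u) \<in> ?S \<rightarrow> carrier_vec n" using S by auto
    have "v \<bullet> y = (\<Sum>u\<in>?S. (a u \<cdot>\<^sub>v u) \<bullet> y)"
      unfolding a[symmetric] vs.lincomb_def using vs.finsum_scalar_prod_sum[OF f y] by simp
    also have "\<dots> = 0"
    proof (rule sum.neutral, rule ballI)
      fix u assume u: "u \<in> ?S"
      then obtain j where j: "j < n" "u = col C j" using C by (auto simp: cols_def)
      have uc: "u \<in> carrier_vec n" using u S by auto
      have "(a u \<cdot>\<^sub>v u) \<bullet> y = a u * (u \<bullet> y)" using uc y by simp
      thus "(a u \<cdot>\<^sub>v u) \<bullet> y = 0" using h j by simp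
    qed
    finally show "v \<bullet> y = 0" .
  qed
  have img: "vx n ` {x. x < 2 ^ n \<and> xf c x n = 0} = ?Kv"
  proof -
    have "vx n ` {x. x < 2 ^ n \<and> xf c x n = 0} = {y \<in> carrier_vec n. \<forall>j<n. col C j \<bullet> y = 0}"
    proof
      show "vx n ` {x. x < 2 ^ n \<and> xf c x n = 0} \<subseteq> {y \<in> carrier_vec n. \<forall>j<n. col C j \<bullet> y = 0}"
        using xf0 by auto
      show "{y \<in> carrier_vec n. \<forall>j<n. col C j \<bullet> y = 0} \<subseteq> vx n ` {x. x < 2 ^ n \<and> xf c x n = 0}"
      proof
        fix y assume y: "y \<in> {y \<in> carrier_vec n. \<forall>j<n. col C j \<bullet> y = 0}"
        hence "vx n (vinv n y) = y" using vx_vinv by auto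
        moreover have "vinv n y \<in> {x. x < 2 ^ n \<and> xf c x n = 0}"
          using y xf0[of "vinv n y"] \<open>vx n (vinv n y) = y\<close> vinv_lt by auto
        ultimately show "y \<in> vx n ` {x. x < 2 ^ n \<and> xf c x n = 0}" by (metis image_eqI)
      qed
    qed
    thus ?thesis using Kv by simp
  qed
  have inj: "inj_on (vx n) {x. x < 2 ^ n \<and> xf c x n = 0}"
    using bij_betw_imp_inj_on[OF vx_bij] by (rule inj_on_subset) auto
  have cK: "card {x. x < 2 ^ n \<and> xf c x n = 0} = card ?Kv"
    using card_image[OF inj] img by simp
  have V: "?V \<subseteq> carrier_vec n" using vs.span_closed[OF S] by blast
  have z: "0\<^sub>v n \<in> ?V"
  proof -
    have "vs.lincomb (\<lambda>_. 0) ?S = 0\<^sub>v n"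
    proof (rule eq_vecI)
      show "dim_vec (vs.lincomb (\<lambda>_. 0) ?S) = dim_vec (0\<^sub>v n)" using vs.lincomb_dim[OF finS S] by simp
      fix i assume "i < dim_vec (0\<^sub>v n)"
      hence i: "i < n" by simp
      show "vs.lincomb (\<lambda>_. 0) ?S $ i = 0\<^sub>v n $ i" unfolding vs.lincomb_index[OF i S] using i by simp
    qed
    thus ?thesis unfolding vs.finite_span[OF finS S] by (intro CollectI exI[of _ "\<lambda>_. 0"]) simp
  qed
  have cl: "\<forall>x\<in>?V. \<forall>y\<in>?V. x + y \<in> ?V" using vs.span_add1[OF S] by simp
  have oc: "card ?V * card ?Kv = 2 ^ n" by (rule orth_count[OF V z cl])
  have r: "card ?V = 2 ^ rank_F2 C"
    using vs.card_col_space[OF C] C by (simp add: rank_F2_def card_UNIV_bit)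
  show ?thesis using oc r cK by (simp add: mult.commute)
qed




section \<open>Polynomial arithmetic for the MUB labels\<close>

lemma coeff_poly_of_nat: "coeff (poly_of_nat n a) i = (if i < n then of_bool (bit a i) else 0)"
  by (simp add: poly_of_nat_def coeff_Poly_eq nth_default_def)

lemma poly_of_nat_xor: "poly_of_nat n (xor a b) = poly_of_nat n a + poly_of_nat n b"
  by (rule poly_eqI) (simp add: coeff_poly_of_nat bit_xor_iff of_bool_neq_bit)

lemma poly_of_nat_0: "poly_of_nat n 0 = 0"
  by (rule poly_eqI) (simp add: coeff_poly_of_nat)

lemma of_bool_bit_inj[simp]: "(of_bool a :: bit) = of_bool b \<longleftrightarrow> a = b"
  by (cases a; cases b) simp_all

lemma ob_mask: "j < n \<Longrightarrow> (of_bool (bit (mask_of n (\<lambda>j. (g j :: bit) = 1)) j) :: bit) = g j"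
  by (cases "g j") (simp_all add: bit_mask_of)

lemma xor_eq_0: "xor (a::nat) b = 0 \<Longrightarrow> a = b"
proof -
  assume h: "xor a b = 0"
  have "a = xor (xor a b) b" by (simp add: xor.assoc)
  thus ?thesis using h by simp
qed

lemma poly_of_nat_inj: "a < 2 ^ n \<Longrightarrow> b < 2 ^ n \<Longrightarrow> poly_of_nat n a = poly_of_nat n b \<Longrightarrow> a = b"
proof -
  assume a: "a < 2 ^ n" and b: "b < 2 ^ n" and e: "poly_of_nat n a = poly_of_nat n b"
  have "\<forall>j<n. bit a j = bit b j"
  proof (intro allI impI)
    fix j assume j: "j < n"
    have "coeff (poly_of_nat n a) j = coeff (poly_of_nat n b) j" using e by simp
    thus "bit a j = bit b j" using j by (simp add: coeff_poly_of_nat)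
  qed
  thus ?thesis using eq_by_bits a b by blast
qed

lemma poly_of_nat_sum: "poly_of_nat n a = (\<Sum>i<n. monom (of_bool (bit a i)) i)"
  by (rule poly_eqI) (simp add: coeff_poly_of_nat coeff_sum)

lemma monom_smult1: "monom (c::'a::comm_semiring_1) i = smult c (monom 1 i)" by (simp add: smult_monom)

lemma bit_add_self: "(a::bit) + a = 0" by (cases a) simp_all

locale galois =
  fixes n :: nat and P :: "bit poly"
  assumes irr: "irreducible P" and degP: "degree P = n"
begin

lemma P0: "P \<noteq> 0" using irr by auto

lemma n_pos: "n > 0"
proof (rule ccontr)
  assume "\<not> n > 0"
  hence "degree P = 0" using degP by simp
  then obtain c where "P = [:c:]" by (metis degree_eq_zeroE)
  hence "is_unit P" using P0 by (simp add: is_unit_const_poly_iff)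
  thus False using irr by (simp add: irreducible_def)
qed

lemma deg_mod: "degree (q mod P) < n"
  using degree_mod_less[OF P0, of q] n_pos degP by auto

lemma deg_pon: "degree (poly_of_nat n a) < n"
proof -
  have "degree (poly_of_nat n a) \<le> n - 1"
    by (rule degree_le) (auto simp: coeff_poly_of_nat)
  thus ?thesis using n_pos by simp
qed

lemma as_sum: "degree r < n \<Longrightarrow> r = (\<Sum>i<n. monom (coeff r i) i)"
proof -
  assume "degree r < n"
  hence "degree r \<le> n - 1" by simp
  from poly_as_sum_of_monoms'[OF this] have "r = (\<Sum>i\<le>n - 1. monom (coeff r i) i)" by simp
  also have "{..n - 1} = {..<n}" using n_pos by auto
  finally show ?thesis .
qed

definition L :: "bit poly \<Rightarrow> bit" where "L q = coeff (q mod P) 0"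

lemma L_add: "L (p + q) = L p + L q" by (simp add: L_def poly_mod_add_left)

lemma L_smult: "L (smult c p) = c * L p" by (simp add: L_def mod_smult_left)

lemma L_sum: "L (sum f A) = (\<Sum>i\<in>A. L (f i))"
proof (induction A rule: infinite_finite_induct)
  case (infinite A) thus ?case by (simp add: L_def)
next
  case empty thus ?case by (simp add: L_def)
next
  case (insert x F) thus ?case by (simp add: L_add)
qed

lemma L_mod: "L (p mod P * q) = L (p * q)"
  by (simp add: L_def mod_mult_left_eq)

lemma L_mod_right: "L (q * (p mod P)) = L (q * p)"
  by (simp add: L_def mod_mult_right_eq)

lemma alpha_L: "alpha_mub n P v i j = L (poly_of_nat n v * monom 1 i * monom 1 j)"
proof -
  define r where "r = (poly_of_nat n v * monom 1 i) mod P"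
  have r: "r = (\<Sum>p<n. monom (coeff r p) p)" using as_sum deg_mod r_def by blast
  have "L (poly_of_nat n v * monom 1 i * monom 1 j) = L (r * monom 1 j)"
    by (simp add: r_def L_mod)
  also have "\<dots> = L (\<Sum>p<n. smult (coeff r p) (monom 1 (p + j)))"
    by (subst r) (simp add: sum_distrib_right mult_monom smult_monom)
  also have "\<dots> = (\<Sum>p<n. coeff r p * L (monom 1 (p + j)))" by (simp add: L_sum L_smult)
  also have "\<dots> = alpha_mub n P v i j"
    by (simp add: alpha_mub_def r_def M0_def Gamma_def L_def)
  finally show ?thesis by simp
qed

definition vp :: "bit poly \<Rightarrow> nat" where "vp r = mask_of n (\<lambda>i. coeff r i = 1)"

lemma vp_lt: "vp r < 2 ^ n" by (simp add: vp_def mask_of_lt)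

lemma pon_vp: "degree r < n \<Longrightarrow> poly_of_nat n (vp r) = r"
proof (rule poly_eqI)
  fix i assume d: "degree r < n"
  show "coeff (poly_of_nat n (vp r)) i = coeff r i"
  proof (cases "i < n")
    case True thus ?thesis by (simp add: coeff_poly_of_nat vp_def ob_mask[symmetric])
  next
    case False thus ?thesis using d by (simp add: coeff_poly_of_nat coeff_eq_0)
  qed
qed

lemma pon_1: "poly_of_nat n 1 = 1"
proof (rule poly_eqI)
  fix i
  have b: "bit (1::nat) i \<longleftrightarrow> i = 0" by (rule bit_1_iff)
  show "coeff (poly_of_nat n 1) i = coeff 1 i"
    using n_pos by (simp only: coeff_poly_of_nat coeff_1 b) simp
qed

lemma inverse_mod:
  assumes nd: "\<not> P dvd q"
  shows "\<exists>h. (q * h) mod P = 1"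
proof -
  define \<phi> where "\<phi> t = vp ((q * poly_of_nat n t) mod P)" for t
  have sub: "\<phi> ` {..<2^n} \<subseteq> {..<2^n}" by (auto simp: \<phi>_def vp_lt)
  have inj: "inj_on \<phi> {..<2^n}"
  proof (rule inj_onI)
    fix t t' assume t: "t \<in> {..<2^n}" and t': "t' \<in> {..<2^n}" and e: "\<phi> t = \<phi> t'"
    have "(q * poly_of_nat n t) mod P = (q * poly_of_nat n t') mod P"
      using arg_cong[OF e, of "poly_of_nat n"] by (simp add: \<phi>_def pon_vp deg_mod)
    hence "P dvd q * (poly_of_nat n t - poly_of_nat n t')"
      by (simp add: mod_eq_dvd_iff right_diff_distrib)
    hence "P dvd (poly_of_nat n t - poly_of_nat n t')"
      using prime_elem_dvd_multD[OF field_poly_irreducible_imp_prime[OF irr]] nd by blast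
    moreover have "degree (poly_of_nat n t - poly_of_nat n t') < n"
      using deg_pon[of t] deg_pon[of t'] degree_diff_le_max[of "poly_of_nat n t" "poly_of_nat n t'"] by simp
    ultimately have "poly_of_nat n t - poly_of_nat n t' = 0"
    proof -
      assume d: "P dvd (poly_of_nat n t - poly_of_nat n t')" and dg: "degree (poly_of_nat n t - poly_of_nat n t') < n"
      show ?thesis
      proof (rule ccontr)
        assume "poly_of_nat n t - poly_of_nat n t' \<noteq> 0"
        hence "degree P \<le> degree (poly_of_nat n t - poly_of_nat n t')" using dvd_imp_degree_le d by blast
        thus False using dg degP by simp
      qed
    qed
    thus "t = t'" using poly_of_nat_inj t t' by simp
  qed
  have "\<phi> ` {..<2^n} = {..<2^n}" by (rule endo_inj_surj[OF _ sub inj]) simp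
  moreover have "(1::nat) \<in> {..<2^n}" using n_pos one_less_power[of "2::nat" n] by simp
  ultimately obtain t where "\<phi> t = 1" by (metis imageE)
  hence "poly_of_nat n (\<phi> t) = 1" using pon_1 by metis
  hence "(q * poly_of_nat n t) mod P = 1" by (simp add: \<phi>_def pon_vp deg_mod)
  thus ?thesis by blast
qed

definition mrow :: "nat \<Rightarrow> nat \<Rightarrow> nat" where
  "mrow v i = mask_of n (\<lambda>j. alpha_mub n P v i j = 1)"

definition fl :: "nat \<Rightarrow> nat \<Rightarrow> nat" where "fl v x = xf (mrow v) x n"

lemma mrow_lt: "mrow v i < 2 ^ n" by (simp add: mrow_def mask_of_lt)

lemma fl_lt: "fl v x < 2 ^ n" unfolding fl_def by (rule xf_lt) (auto simp: mrow_lt)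

lemma fl_0: "fl v 0 = 0" by (simp add: fl_def)

lemma fl_bit: "j < n \<Longrightarrow> (of_bool (bit (fl v x) j) :: bit) = L (poly_of_nat n v * poly_of_nat n x * monom 1 j)"
proof -
  assume j: "j < n"
  have "(of_bool (bit (fl v x) j) :: bit) = (\<Sum>i<n. of_bool (bit x i) * alpha_mub n P v i j)"
    unfolding fl_def xf_bit mrow_def using j
    by (intro sum.cong refl) (simp add: ob_mask)
  also have "\<dots> = (\<Sum>i<n. L (smult (of_bool (bit x i)) (poly_of_nat n v * monom 1 i * monom 1 j)))"
    by (simp add: alpha_L L_smult)
  also have "\<dots> = L (\<Sum>i<n. smult (of_bool (bit x i)) (poly_of_nat n v * monom 1 i * monom 1 j))"
    by (simp add: L_sum)
  also have "(\<Sum>i<n. smult (of_bool (bit x i)) (poly_of_nat n v * monom 1 i * monom 1 j)) =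
      poly_of_nat n v * poly_of_nat n x * monom 1 j"
  proof -
    have mi: "monom c i = smult c (monom 1 i)" for c :: bit and i by (simp add: smult_monom)
    have "poly_of_nat n v * poly_of_nat n x * monom 1 j =
        (\<Sum>i<n. poly_of_nat n v * monom (of_bool (bit x i)) i * monom 1 j)"
      by (simp only: poly_of_nat_sum[of n x] sum_distrib_left sum_distrib_right)
    also have "\<dots> = (\<Sum>i<n. smult (of_bool (bit x i)) (poly_of_nat n v * monom 1 i * monom 1 j))"
      by (intro sum.cong refl) (subst mi, simp)
    finally show ?thesis by simp
  qed
  finally show ?thesis .
qed

lemma fl_inj:
  assumes x: "x < 2 ^ n" "x \<noteq> 0" and v: "v < 2 ^ n" "v' < 2 ^ n" and e: "fl v x = fl v' x"
  shows "v = v'"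
proof (rule ccontr)
  assume ne: "v \<noteq> v'"
  define a where "a = poly_of_nat n (xor v v')"
  define px where "px = poly_of_nat n x"
  define q where "q = a * px"
  have a0: "a \<noteq> 0"
  proof
    assume "a = 0"
    hence "poly_of_nat n (xor v v') = poly_of_nat n 0" by (simp add: a_def poly_of_nat_0)
    hence "xor v v' = 0" using poly_of_nat_inj xor_lt_pow v by (metis zero_less_numeral zero_less_power)
    thus False using ne xor_eq_0 by blast
  qed
  have px0: "px \<noteq> 0"
  proof
    assume "px = 0"
    hence "poly_of_nat n x = poly_of_nat n 0" by (simp add: px_def poly_of_nat_0)
    hence "x = 0" using poly_of_nat_inj x by (metis zero_less_numeral zero_less_power)
    thus False using x by simp
  qed
  have Lq: "L (q * monom 1 j) = 0" if j: "j < n" for j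
  proof -
    have "(of_bool (bit (fl v x) j) :: bit) = of_bool (bit (fl v' x) j)" using e by simp
    hence "L (poly_of_nat n v * px * monom 1 j) = L (poly_of_nat n v' * px * monom 1 j)"
      using fl_bit[OF j] px_def by simp
    hence "L (poly_of_nat n v * px * monom 1 j) + L (poly_of_nat n v' * px * monom 1 j) = 0"
      by (metis bit_add_self)
    moreover have "q * monom 1 j = poly_of_nat n v * px * monom 1 j + poly_of_nat n v' * px * monom 1 j"
      by (simp add: q_def a_def poly_of_nat_xor algebra_simps)
    ultimately show ?thesis by (simp only: L_add)
  qed
  have pr: "prime_elem P" using irr by (rule field_poly_irreducible_imp_prime)
  have nd: "\<not> P dvd q"
  proof
    assume "P dvd q"
    hence "P dvd a \<or> P dvd px" using prime_elem_dvd_multD[OF pr] q_def by blast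
    moreover have "\<not> P dvd a"
    proof
      assume "P dvd a" hence "degree P \<le> degree a" using dvd_imp_degree_le a0 by blast
      thus False using deg_pon[of "xor v v'"] degP a_def by simp
    qed
    moreover have "\<not> P dvd px"
    proof
      assume "P dvd px" hence "degree P \<le> degree px" using dvd_imp_degree_le px0 by blast
      thus False using deg_pon[of x] degP px_def by simp
    qed
    ultimately show False by blast
  qed
  obtain h where hq: "(q * h) mod P = 1" using inverse_mod[OF nd] by blast
  have L1: "L (q * h) = 1" by (simp add: L_def hq)
  define h' where "h' = h mod P"
  have "L (q * h) = L (q * h')" by (simp add: h'_def L_mod_right)
  also have "\<dots> = L (\<Sum>j<n. smult (coeff h' j) (q * monom 1 j))"
  proof -
    have hs: "h' = (\<Sum>j<n. monom (coeff h' j) j)" using as_sum deg_mod h'_def by blast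
    have "q * h' = (\<Sum>j<n. q * monom (coeff h' j) j)" by (subst hs) (simp add: sum_distrib_left)
    also have "\<dots> = (\<Sum>j<n. smult (coeff h' j) (q * monom 1 j))"
      by (intro sum.cong refl) (subst monom_smult1, simp)
    finally show ?thesis by simp
  qed
  also have "\<dots> = (\<Sum>j<n. coeff h' j * L (q * monom 1 j))" by (simp add: L_sum L_smult)
  also have "\<dots> = 0" by (simp add: Lq)
  finally show False using L1 by simp
qed

end




lemma conj_back:
  assumes W: "unit_mat n W" and A: "A \<in> carrier_mat (2^n) (2^n)"
  shows "W * (mat_adjoint W * A * W) * mat_adjoint W = A"
proof -
  have W1: "W \<in> carrier_mat (2^n) (2^n)" and W2: "mat_adjoint W \<in> carrier_mat (2^n) (2^n)"
    using W adj_carrier by (auto simp: unit_mat_def)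
  have "W * (mat_adjoint W * A * W) * mat_adjoint W = (W * mat_adjoint W) * A * (W * mat_adjoint W)"
    using W1 W2 A by (simp add: assoc_sq)
  also have "\<dots> = A" using W A by (simp add: unit_mat_def)
  finally show ?thesis .
qed

lemma ph_nonzero:
  assumes W: "unit_mat n W" and a: "a < 2 ^ n" and M: "M \<in> carrier_mat (2^n) (2^n)"
    and eq: "mat_adjoint W * pauli n a b * W = ph \<cdot>\<^sub>m M"
  shows "ph \<noteq> 0"
proof
  assume "ph = 0"
  hence "mat_adjoint W * pauli n a b * W = 0\<^sub>m (2^n) (2^n)" using eq M by (auto simp: eq_matI)
  hence "pauli n a b = W * 0\<^sub>m (2^n) (2^n) * mat_adjoint W" using conj_back[OF W, of "pauli n a b"] by simp
  also have "\<dots> = 0\<^sub>m (2^n) (2^n)" using W adj_carrier by (auto simp: unit_mat_def)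
  finally have "pauli n a b $$ (a, 0) = 0" using a by simp
  thus False using pauli_nonzero[OF a] by simp
qed

lemma tabl_ex:
  assumes W: "unit_mat n W"
    and h: "\<forall>i<n. \<exists>ph a b. ph \<noteq> 0 \<and> a < 2 ^ n \<and> b < 2 ^ n \<and> mat_adjoint W * Zq n i * W = ph \<cdot>\<^sub>m pauli n a b"
  shows "\<exists>ph c d. tabl n W ph c d"
proof -
  have "\<forall>i. \<exists>t. i < n \<longrightarrow> (fst t \<noteq> 0 \<and> fst (snd t) < 2 ^ n \<and> snd (snd t) < 2 ^ n \<and>
      mat_adjoint W * Zq n i * W = fst t \<cdot>\<^sub>m pauli n (fst (snd t)) (snd (snd t)))"
  proof
    fix i show "\<exists>t. i < n \<longrightarrow> (fst t \<noteq> 0 \<and> fst (snd t) < 2 ^ n \<and> snd (snd t) < 2 ^ n \<and>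
      mat_adjoint W * Zq n i * W = fst t \<cdot>\<^sub>m pauli n (fst (snd t)) (snd (snd t)))"
    proof (cases "i < n")
      case True
      then obtain ph a b where "ph \<noteq> 0 \<and> a < 2 ^ n \<and> b < 2 ^ n \<and> mat_adjoint W * Zq n i * W = ph \<cdot>\<^sub>m pauli n a b"
        using h by blast
      thus ?thesis by (intro exI[of _ "(ph, a, b)"]) simp
    qed simp
  qed
  then obtain f where f: "\<forall>i. i < n \<longrightarrow> (fst (f i) \<noteq> 0 \<and> fst (snd (f i)) < 2 ^ n \<and> snd (snd (f i)) < 2 ^ n \<and>
      mat_adjoint W * Zq n i * W = fst (f i) \<cdot>\<^sub>m pauli n (fst (snd (f i))) (snd (snd (f i))))"
    by (metis choice)
  have "tabl n W (\<lambda>i. fst (f i)) (\<lambda>i. fst (snd (f i))) (\<lambda>i. snd (snd (f i)))"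
    by unfold_locales (use W f in auto)
  thus ?thesis by blast
qed

lemma V_conj:
  assumes V: "clifford n V" and a: "a < 2 ^ n" and b: "b < 2 ^ n"
  shows "\<exists>ph a' b'. ph \<noteq> 0 \<and> a' < 2 ^ n \<and> b' < 2 ^ n \<and> V * pauli n a b * mat_adjoint V = ph \<cdot>\<^sub>m pauli n a' b'"
proof -
  have Vu: "unit_mat n V" using V unitary_unit by (simp add: clifford_def)
  have Va: "unit_mat n (mat_adjoint V)" using unit_adj[OF Vu] .
  obtain ph a' b' where h: "a' < 2 ^ n" "b' < 2 ^ n" "V * pauli n a b * mat_adjoint V = ph \<cdot>\<^sub>m pauli n a' b'"
    using V a b unfolding clifford_def by blast
  have "mat_adjoint (mat_adjoint V) * pauli n a b * mat_adjoint V = ph \<cdot>\<^sub>m pauli n a' b'"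
    using h adj_adj by simp
  hence "ph \<noteq> 0" using ph_nonzero[OF Va a pauli_carrier] by blast
  thus ?thesis using h by blast
qed

lemma W_tab:
  assumes U: "unit_mat n U" and V: "clifford n V"
    and hU: "\<forall>i<n. \<exists>ph c d. ph \<noteq> 0 \<and> c < 2 ^ n \<and> d < 2 ^ n \<and> mat_adjoint U * Zq n i * U = ph \<cdot>\<^sub>m pauli n c d"
  shows "\<forall>i<n. \<exists>ph a b. ph \<noteq> 0 \<and> a < 2 ^ n \<and> b < 2 ^ n \<and>
     mat_adjoint (U * mat_adjoint V) * Zq n i * (U * mat_adjoint V) = ph \<cdot>\<^sub>m pauli n a b"
proof (intro allI impI)
  fix i assume i: "i < n"
  have Vu: "unit_mat n V" using V unitary_unit by (simp add: clifford_def)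
  have Va: "unit_mat n (mat_adjoint V)" using unit_adj[OF Vu] .
  obtain ph c d where h: "ph \<noteq> 0" "c < 2 ^ n" "d < 2 ^ n" "mat_adjoint U * Zq n i * U = ph \<cdot>\<^sub>m pauli n c d"
    using hU i by blast
  obtain ph' a' b' where h': "ph' \<noteq> 0" "a' < 2 ^ n" "b' < 2 ^ n" "V * pauli n c d * mat_adjoint V = ph' \<cdot>\<^sub>m pauli n a' b'"
    using V_conj[OF V h(2,3)] by blast
  have "mat_adjoint (U * mat_adjoint V) * Zq n i * (U * mat_adjoint V) = V * (ph \<cdot>\<^sub>m pauli n c d) * mat_adjoint V"
    using conj_conj[OF U Vu, of "Zq n i"] h(4) by (simp add: Zq_pauli)
  also have "\<dots> = ph \<cdot>\<^sub>m (V * pauli n c d * mat_adjoint V)"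
    using conj_smult[OF Va, of "pauli n c d" ph] adj_adj by simp
  also have "\<dots> = (ph * ph') \<cdot>\<^sub>m pauli n a' b'" using h'(4) by (simp add: smult_smult_mat)
  finally show "\<exists>ph a b. ph \<noteq> 0 \<and> a < 2 ^ n \<and> b < 2 ^ n \<and>
     mat_adjoint (U * mat_adjoint V) * Zq n i * (U * mat_adjoint V) = ph \<cdot>\<^sub>m pauli n a b"
    using h(1) h'(1-3) by (intro exI[of _ "ph * ph'"] exI[of _ a'] exI[of _ b']) simp
qed

lemma ens_prop:
  assumes mf: "mub_family n P Uf" and U: "U \<in> set (mub_ensemble n Uf)"
  shows "unit_mat n U \<and> (\<forall>i<n. \<exists>ph c d. ph \<noteq> 0 \<and> c < 2 ^ n \<and> d < 2 ^ n \<and> mat_adjoint U * Zq n i * U = ph \<cdot>\<^sub>m pauli n c d)"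
proof (cases "U = 1\<^sub>m (2 ^ n)")
  case True
  have "\<forall>i<n. mat_adjoint U * Zq n i * U = 1 \<cdot>\<^sub>m pauli n 0 (2 ^ i)"
    using True by (simp add: adj_one Zq_pauli)
  have "\<forall>i<n. \<exists>ph c d. ph \<noteq> 0 \<and> c < 2 ^ n \<and> d < 2 ^ n \<and> mat_adjoint U * Zq n i * U = ph \<cdot>\<^sub>m pauli n c d"
  proof (intro allI impI)
    fix i assume i: "i < n"
    have "(2::nat) ^ i < 2 ^ n" using i by simp
    thus "\<exists>ph c d. ph \<noteq> 0 \<and> c < 2 ^ n \<and> d < 2 ^ n \<and> mat_adjoint U * Zq n i * U = ph \<cdot>\<^sub>m pauli n c d"
      using \<open>\<forall>i<n. mat_adjoint U * Zq n i * U = 1 \<cdot>\<^sub>m pauli n 0 (2 ^ i)\<close> i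
      by (intro exI[of _ "1::complex"] exI[of _ "0::nat"] exI[of _ "2 ^ i"]) simp
  qed
  thus ?thesis using True one_unit by simp
next
  case False
  then obtain v where v: "v < 2 ^ n" "U = Uf v" using U by (auto simp: mub_ensemble_def)
  have cl: "clifford n (Uf v)" and g: "\<forall>i<n. \<exists>s::complex. (s = 1 \<or> s = -1) \<and>
        mat_adjoint (Uf v) * Zq n i * Uf v = s \<cdot>\<^sub>m g_mub n P v i"
    using mf v by (auto simp: mub_family_def)
  have Uu: "unit_mat n U" using cl v unitary_unit by (simp add: clifford_def)
  have "\<forall>i<n. \<exists>ph c d. ph \<noteq> 0 \<and> c < 2 ^ n \<and> d < 2 ^ n \<and> mat_adjoint U * Zq n i * U = ph \<cdot>\<^sub>m pauli n c d"
  proof (intro allI impI)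
    fix i assume i: "i < n"
    obtain s :: complex where s: "s = 1 \<or> s = -1" "mat_adjoint (Uf v) * Zq n i * Uf v = s \<cdot>\<^sub>m g_mub n P v i"
      using g i by blast
    let ?e = "\<i> ^ (if alpha_mub n P v i i = 1 then 1 else 0) :: complex"
    have "mat_adjoint U * Zq n i * U = (s * ?e) \<cdot>\<^sub>m pauli n (2 ^ i) (mask_of n (\<lambda>j. alpha_mub n P v i j = 1))"
      using s(2) v(2) by (simp add: g_mub_def smult_smult_mat)
    moreover have "s * ?e \<noteq> 0" using s(1) by auto
    moreover have "(2::nat) ^ i < 2 ^ n" using i by simp
    ultimately show "\<exists>ph c d. ph \<noteq> 0 \<and> c < 2 ^ n \<and> d < 2 ^ n \<and> mat_adjoint U * Zq n i * U = ph \<cdot>\<^sub>m pauli n c d"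
      using mask_of_lt by blast
  qed
  thus ?thesis using Uu by blast
qed


lemma part2:
  assumes V: "clifford n V" and U: "unit_mat n U" and zt: "z_tableau n (U * mat_adjoint V) C D"
  shows "card {b. b < 2 ^ n \<and> outcome_prob U V b = 1 / 2 ^ rank_F2 C} = 2 ^ rank_F2 C \<and>
         card {b. b < 2 ^ n \<and> outcome_prob U V b = 0} = 2 ^ n - 2 ^ rank_F2 C"
proof -
  let ?W = "U * mat_adjoint V"
  have Vu: "unit_mat n V" using V unitary_unit by (simp add: clifford_def)
  have Wu: "unit_mat n ?W" using unit_mult[OF U unit_adj[OF Vu]] .
  define cC where "cC = (\<lambda>i. mask_of n (\<lambda>j. C $$ (i, j) = 1))"
  define dD where "dD = (\<lambda>i. mask_of n (\<lambda>j. D $$ (i, j) = 1))"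
  have Cc: "C \<in> carrier_mat n n" using zt by (simp add: z_tableau_def)
  have "\<forall>i. \<exists>ph. i < n \<longrightarrow> mat_adjoint ?W * Zq n i * ?W = ph \<cdot>\<^sub>m pauli n (cC i) (dD i)"
    using zt unfolding z_tableau_def cC_def dD_def by blast
  then obtain ph where ph: "\<forall>i. i < n \<longrightarrow> mat_adjoint ?W * Zq n i * ?W = ph i \<cdot>\<^sub>m pauli n (cC i) (dD i)"
    by (metis choice)
  have phnz: "\<forall>i<n. ph i \<noteq> 0"
  proof (intro allI impI)
    fix i assume i: "i < n"
    show "ph i \<noteq> 0" using ph_nonzero[OF Wu _ pauli_carrier, of 0 "2 ^ i" "ph i"] ph i by (simp add: Zq_pauli)
  qed
  interpret t: tabl n ?W ph cC dD
    by unfold_locales (use Wu ph phnz in \<open>auto simp: cC_def dD_def mask_of_lt\<close>)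
  have pr: "outcome_prob U V b = t.pr b" for b by (simp add: outcome_prob_def t.pr_def)
  have rc: "card t.K * 2 ^ rank_F2 C = 2 ^ n" using rank_count[OF Cc] t.K_alt by (simp add: cC_def)
  have tk: "card t.T * card t.K = 2 ^ n" by (rule t.card_TK)
  have Kpos: "card t.K > 0" using t.finite_K t.K_0 card_gt_0_iff by blast
  have cT: "card t.T = 2 ^ rank_F2 C" using rc tk Kpos by (metis mult.commute mult_left_cancel neq0_conv)
  have val: "real (card t.K) / 2 ^ n = 1 / 2 ^ rank_F2 C"
  proof -
    have "real (card t.K) * 2 ^ rank_F2 C = 2 ^ n" using rc by (metis of_nat_mult of_nat_numeral of_nat_power)
    thus ?thesis by (simp add: field_simps)
  qed
  have "card {b. b < 2 ^ n \<and> outcome_prob U V b = 1 / 2 ^ rank_F2 C} = card t.T"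
    using t.card_pr_pos by (simp add: pr val)
  moreover have "card {b. b < 2 ^ n \<and> outcome_prob U V b = 0} = 2 ^ n - card t.T"
    using t.card_pr_zero by (simp add: pr)
  ultimately show ?thesis using cT by simp
qed

lemma part1_max:
  assumes V: "clifford n V" and U: "unit_mat n U"
    and hU: "\<forall>i<n. \<exists>ph c d. ph \<noteq> 0 \<and> c < 2 ^ n \<and> d < 2 ^ n \<and> mat_adjoint U * Zq n i * U = ph \<cdot>\<^sub>m pauli n c d"
  shows "Max ((\<lambda>b. outcome_prob U V b) ` {..<2 ^ n}) =
    card {x. x < 2 ^ n \<and> (V * (mat_adjoint U * pauli n 0 x * U) * mat_adjoint V) $$ (0, 0) \<noteq> 0} / 2 ^ n"
proof -
  let ?W = "U * mat_adjoint V"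
  have Vu: "unit_mat n V" using V unitary_unit by (simp add: clifford_def)
  have Wu: "unit_mat n ?W" using unit_mult[OF U unit_adj[OF Vu]] .
  obtain ph c d where "tabl n ?W ph c d" using tabl_ex[OF Wu W_tab[OF U V hU]] by blast
  then interpret t: tabl n ?W ph c d .
  have pr: "outcome_prob U V b = t.pr b" for b by (simp add: outcome_prob_def t.pr_def)
  have K: "t.K = {x. x < 2 ^ n \<and> (V * (mat_adjoint U * pauli n 0 x * U) * mat_adjoint V) $$ (0, 0) \<noteq> 0}"
    unfolding t.K_def t.th_def t.Q_def using conj_conj[OF U Vu] by simp
  show ?thesis using t.max_pr K by (simp add: pr)
qed


lemma card_S:
  assumes V: "clifford n V"
  shows "card {(a, b). a < 2 ^ n \<and> b < 2 ^ n \<and> (V * pauli n a b * mat_adjoint V) $$ (0, 0) \<noteq> 0} = 2 ^ n"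
proof -
  let ?A = "{..<(2::nat)^n} \<times> {..<(2::nat)^n}"
  have Vu: "unit_mat n V" using V unitary_unit by (simp add: clifford_def)
  have Va: "unit_mat n (mat_adjoint V)" using unit_adj[OF Vu] .
  have "\<forall>p. \<exists>t. p \<in> ?A \<longrightarrow> (fst t \<noteq> 0 \<and> fst (snd t) < 2 ^ n \<and> snd (snd t) < 2 ^ n \<and>
      V * pauli n (fst p) (snd p) * mat_adjoint V = fst t \<cdot>\<^sub>m pauli n (fst (snd t)) (snd (snd t)))"
  proof
    fix p show "\<exists>t. p \<in> ?A \<longrightarrow> (fst t \<noteq> 0 \<and> fst (snd t) < 2 ^ n \<and> snd (snd t) < 2 ^ n \<and>
      V * pauli n (fst p) (snd p) * mat_adjoint V = fst t \<cdot>\<^sub>m pauli n (fst (snd t)) (snd (snd t)))"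
    proof (cases "p \<in> ?A")
      case True
      then obtain ph a' b' where "ph \<noteq> 0 \<and> a' < 2 ^ n \<and> b' < 2 ^ n \<and>
          V * pauli n (fst p) (snd p) * mat_adjoint V = ph \<cdot>\<^sub>m pauli n a' b'"
        using V_conj[OF V, of "fst p" "snd p"] by (auto simp: mem_Times_iff)
      thus ?thesis by (intro exI[of _ "(ph, a', b')"]) simp
    qed simp
  qed
  then obtain g where g: "\<forall>p. p \<in> ?A \<longrightarrow> (fst (g p) \<noteq> 0 \<and> fst (snd (g p)) < 2 ^ n \<and> snd (snd (g p)) < 2 ^ n \<and>
      V * pauli n (fst p) (snd p) * mat_adjoint V = fst (g p) \<cdot>\<^sub>m pauli n (fst (snd (g p))) (snd (snd (g p))))"
    by (metis choice)
  have gi: "fst (g p) \<noteq> 0" "fst (snd (g p)) < 2 ^ n" "snd (snd (g p)) < 2 ^ n"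
      "V * pauli n (fst p) (snd p) * mat_adjoint V = fst (g p) \<cdot>\<^sub>m pauli n (fst (snd (g p))) (snd (snd (g p)))"
    if p: "p \<in> ?A" for p using g p by blast+
  define \<phi> where "\<phi> p = snd (g p)" for p
  have sub: "\<phi> ` ?A \<subseteq> ?A"
  proof
    fix q assume "q \<in> \<phi> ` ?A"
    then obtain p where p: "p \<in> ?A" "q = \<phi> p" by auto
    have "fst (snd (g p)) < 2 ^ n" "snd (snd (g p)) < 2 ^ n" using gi p(1) by auto
    thus "q \<in> ?A" using p(2) by (simp add: \<phi>_def mem_Times_iff)
  qed
  have bk: "mat_adjoint V * (V * pauli n a b * mat_adjoint V) * V = pauli n a b" for a b
    using conj_back[OF Va, of "pauli n a b"] adj_adj by simp
  have inj: "inj_on \<phi> ?A"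
  proof (rule inj_onI)
    fix p p' assume p: "p \<in> ?A" and p': "p' \<in> ?A" and e: "\<phi> p = \<phi> p'"
    define X where "X = pauli n (fst (\<phi> p)) (snd (\<phi> p))"
    define Y where "Y = mat_adjoint V * X * V"
    have gp: "V * pauli n (fst p) (snd p) * mat_adjoint V = fst (g p) \<cdot>\<^sub>m X"
      unfolding X_def \<phi>_def by (rule gi(4)[OF p])
    have gp': "V * pauli n (fst p') (snd p') * mat_adjoint V = fst (g p') \<cdot>\<^sub>m X"
      unfolding X_def e unfolding \<phi>_def by (rule gi(4)[OF p'])
    have P1: "pauli n (fst p) (snd p) = fst (g p) \<cdot>\<^sub>m Y"
      using bk[of "fst p" "snd p"] gp conj_smult[OF Vu, of X] by (simp add: Y_def X_def)
    have P2: "pauli n (fst p') (snd p') = fst (g p') \<cdot>\<^sub>m Y"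
      using bk[of "fst p'" "snd p'"] gp' conj_smult[OF Vu, of X] by (simp add: Y_def X_def)
    have nz: "fst (g p) \<noteq> 0" using gi(1)[OF p] .
    have "1 \<cdot>\<^sub>m pauli n (fst p') (snd p') = (fst (g p') / fst (g p)) \<cdot>\<^sub>m pauli n (fst p) (snd p)"
      using P1 P2 nz by (simp add: smult_smult_mat)
    hence "fst p' = fst p \<and> snd p' = snd p"
      using pauli_unique[of 1 "fst p'" n "fst p" "snd p'" "snd p"] p p' by (auto simp: mem_Times_iff)
    thus "p = p'" by (simp add: prod_eq_iff)
  qed
  have surj: "\<phi> ` ?A = ?A" by (rule endo_inj_surj[OF _ sub inj]) simp
  let ?S = "{(a, b). a < 2 ^ n \<and> b < 2 ^ n \<and> (V * pauli n a b * mat_adjoint V) $$ (0, 0) \<noteq> 0}"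
  have S: "?S = {p \<in> ?A. fst (\<phi> p) = 0}"
  proof -
    have "(V * pauli n (fst p) (snd p) * mat_adjoint V) $$ (0, 0) \<noteq> 0 \<longleftrightarrow> fst (\<phi> p) = 0" if p: "p \<in> ?A" for p
    proof -
      have "(V * pauli n (fst p) (snd p) * mat_adjoint V) $$ (0, 0) = fst (g p) * (if fst (\<phi> p) = 0 then 1 else 0)"
        unfolding gi(4)[OF p] by (simp add: \<phi>_def pauli_entry00)
      thus ?thesis using gi(1)[OF p] by simp
    qed
    hence pw2: "\<And>a b. a < 2 ^ n \<Longrightarrow> b < 2 ^ n \<Longrightarrow>
        (V * pauli n a b * mat_adjoint V) $$ (0, 0) \<noteq> 0 \<longleftrightarrow> fst (\<phi> (a, b)) = 0"
      by (metis fst_conv snd_conv lessThan_iff mem_Times_iff)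
    show ?thesis
    proof (rule equalityI; rule subsetI)
      fix p assume "p \<in> ?S"
      thus "p \<in> {p \<in> ?A. fst (\<phi> p) = 0}" using pw2 by (cases p) auto
    next
      fix p assume "p \<in> {p \<in> ?A. fst (\<phi> p) = 0}"
      thus "p \<in> ?S" using pw2 by (cases p) auto
    qed
  qed
  have "\<phi> ` {p \<in> ?A. fst (\<phi> p) = 0} = {q \<in> ?A. fst q = 0}"
  proof (rule equalityI; rule subsetI)
    fix q assume "q \<in> \<phi> ` {p \<in> ?A. fst (\<phi> p) = 0}"
    thus "q \<in> {q \<in> ?A. fst q = 0}" using sub by auto
  next
    fix q assume q: "q \<in> {q \<in> ?A. fst q = 0}"
    hence "q \<in> \<phi> ` ?A" using surj by simp
    then obtain p where "p \<in> ?A" "q = \<phi> p" by blast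
    thus "q \<in> \<phi> ` {p \<in> ?A. fst (\<phi> p) = 0}" using q by blast
  qed
  also have "{q \<in> ?A. fst q = 0} = {0} \<times> {..<2^n}" by auto
  finally have im: "\<phi> ` ?S = {0} \<times> {..<2^n}" using S by simp
  have "card ?S = card (\<phi> ` ?S)"
    by (rule card_image[symmetric], rule inj_on_subset[OF inj]) (auto simp: mem_Times_iff)
  thus ?thesis using im by simp
qed

lemma xf_pow2: "xf (\<lambda>i. 2 ^ i) x k = take_bit k x"
  by (induction k) (simp_all add: take_bit_Suc_xor)

lemma card_ind: "card {x. x < (N::nat) \<and> Q x} = (\<Sum>x<N. if Q x then 1 else 0)"
proof -
  have "(\<Sum>x<N. if Q x then 1 else 0) = card ({..<N} \<inter> {x. Q x})" by (simp add: sum.If_cases)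
  also have "{..<N} \<inter> {x. Q x} = {x. x < N \<and> Q x}" by auto
  finally show ?thesis by simp
qed

context galois
begin

lemma count:
  fixes S :: "(nat \<times> nat) set"
  assumes S: "S \<subseteq> {..<2^n} \<times> {..<2^n}" and z: "(0, 0) \<in> S"
  shows "card {x. x < 2 ^ n \<and> (0, x) \<in> S} + (\<Sum>v<2^n. card {x. x < 2 ^ n \<and> (x, fl v x) \<in> S}) = 2 ^ n + card S"
proof -
  define Sx where "Sx x = {b. b < 2 ^ n \<and> (x, b) \<in> S}" for x
  have SS: "S = Sigma {..<2^n} Sx" using S by (auto simp: Sx_def)
  have cS: "card S = (\<Sum>x<2^n. card (Sx x))" unfolding SS by (rule card_SigmaI) (auto simp: Sx_def)
  have sw: "(\<Sum>v<2^n. card {x. x < 2 ^ n \<and> (x, fl v x) \<in> S}) = (\<Sum>x<2^n. card {v. v < 2 ^ n \<and> (x, fl v x) \<in> S})"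
    by (simp only: card_ind) (rule sum.swap)
  have x0: "card {v. v < 2 ^ n \<and> (0, fl v 0) \<in> S} = 2 ^ n" using z by (simp add: fl_0)
  have xn: "card {v. v < 2 ^ n \<and> (x, fl v x) \<in> S} = card (Sx x)" if x: "x < 2 ^ n" "x \<noteq> 0" for x
  proof -
    have inj: "inj_on (\<lambda>v. fl v x) {..<2^n}"
      by (rule inj_onI) (use fl_inj x in blast)
    have surj: "(\<lambda>v. fl v x) ` {..<2^n} = {..<2^n}" by (rule endo_inj_surj[OF _ _ inj]) (auto simp: fl_lt)
    have "(\<lambda>v. fl v x) ` {v. v < 2 ^ n \<and> (x, fl v x) \<in> S} = Sx x"
    proof
      show "(\<lambda>v. fl v x) ` {v. v < 2 ^ n \<and> (x, fl v x) \<in> S} \<subseteq> Sx x" by (auto simp: Sx_def fl_lt)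
      show "Sx x \<subseteq> (\<lambda>v. fl v x) ` {v. v < 2 ^ n \<and> (x, fl v x) \<in> S}"
      proof
        fix b assume "b \<in> Sx x"
        hence b: "b < 2 ^ n" "(x, b) \<in> S" by (auto simp: Sx_def)
        then obtain v where "v < 2 ^ n" "fl v x = b" using surj by (metis imageE lessThan_iff)
        thus "b \<in> (\<lambda>v. fl v x) ` {v. v < 2 ^ n \<and> (x, fl v x) \<in> S}" using b by auto
      qed
    qed
    moreover have "inj_on (\<lambda>v. fl v x) {v. v < 2 ^ n \<and> (x, fl v x) \<in> S}"
      by (rule inj_on_subset[OF inj]) auto
    ultimately show ?thesis by (metis card_image)
  qed
  have fin: "finite {..<(2::nat)^n}" by simp
  have "(\<Sum>x<2^n. card {v. v < 2 ^ n \<and> (x, fl v x) \<in> S}) =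
      card {v. v < 2 ^ n \<and> (0, fl v 0) \<in> S} + (\<Sum>x\<in>{..<2^n} - {0}. card {v. v < 2 ^ n \<and> (x, fl v x) \<in> S})"
    by (rule sum.remove[OF fin]) simp
  also have "\<dots> = 2 ^ n + (\<Sum>x\<in>{..<2^n} - {0}. card (Sx x))"
  proof -
    have "(\<Sum>x\<in>{..<2^n} - {0}. card {v. v < 2 ^ n \<and> (x, fl v x) \<in> S}) = (\<Sum>x\<in>{..<2^n} - {0}. card (Sx x))"
      by (rule sum.cong[OF refl]) (rule xn, auto)
    thus ?thesis using x0 by simp
  qed
  finally have A: "(\<Sum>x<2^n. card {v. v < 2 ^ n \<and> (x, fl v x) \<in> S}) = 2 ^ n + (\<Sum>x\<in>{..<2^n} - {0}. card (Sx x))" .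
  have B: "(\<Sum>x<2^n. card (Sx x)) = card (Sx 0) + (\<Sum>x\<in>{..<2^n} - {0}. card (Sx x))"
    by (rule sum.remove[OF fin]) simp
  have C: "card {x. x < 2 ^ n \<and> (0, x) \<in> S} = card (Sx 0)" by (simp add: Sx_def)
  show ?thesis using A B C cS sw by simp
qed

end



context galois
begin

lemma Kv:
  assumes mf: "mub_family n P Uf" and v: "v < 2 ^ n" and V: "clifford n V"
  shows "{x. x < 2 ^ n \<and> (V * (mat_adjoint (Uf v) * pauli n 0 x * Uf v) * mat_adjoint V) $$ (0, 0) \<noteq> 0} =
    {x. x < 2 ^ n \<and> (x, fl v x) \<in> {(a, b). a < 2 ^ n \<and> b < 2 ^ n \<and> (V * pauli n a b * mat_adjoint V) $$ (0, 0) \<noteq> 0}}"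
proof -
  have Vu: "unit_mat n V" using V unitary_unit by (simp add: clifford_def)
  have Va: "unit_mat n (mat_adjoint V)" using unit_adj[OF Vu] .
  have cl: "clifford n (Uf v)" and g: "\<forall>i<n. \<exists>s::complex. (s = 1 \<or> s = -1) \<and>
        mat_adjoint (Uf v) * Zq n i * Uf v = s \<cdot>\<^sub>m g_mub n P v i"
    using mf v unfolding mub_family_def by blast+
  have Uu: "unit_mat n (Uf v)" using cl unitary_unit by (simp add: clifford_def)
  have "\<forall>i. \<exists>ph. i < n \<longrightarrow> ph \<noteq> 0 \<and> mat_adjoint (Uf v) * Zq n i * Uf v = ph \<cdot>\<^sub>m pauli n (2 ^ i) (mrow v i)"
  proof
    fix i show "\<exists>ph. i < n \<longrightarrow> ph \<noteq> 0 \<and> mat_adjoint (Uf v) * Zq n i * Uf v = ph \<cdot>\<^sub>m pauli n (2 ^ i) (mrow v i)"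
    proof (cases "i < n")
      case True
      obtain s :: complex where s: "s = 1 \<or> s = -1" "mat_adjoint (Uf v) * Zq n i * Uf v = s \<cdot>\<^sub>m g_mub n P v i"
        using g True by blast
      let ?e = "\<i> ^ (if alpha_mub n P v i i = 1 then 1 else 0) :: complex"
      have "mat_adjoint (Uf v) * Zq n i * Uf v = (s * ?e) \<cdot>\<^sub>m pauli n (2 ^ i) (mrow v i)"
        using s(2) by (simp add: g_mub_def smult_smult_mat mrow_def)
      moreover have "s * ?e \<noteq> 0" using s(1) by auto
      ultimately show ?thesis by blast
    qed simp
  qed
  then obtain ph where ph: "\<forall>i. i < n \<longrightarrow> ph i \<noteq> 0 \<and> mat_adjoint (Uf v) * Zq n i * Uf v = ph i \<cdot>\<^sub>m pauli n (2 ^ i) (mrow v i)"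
    by (metis choice)
  have hyp: "\<forall>i<n. mat_adjoint (Uf v) * Zq n i * Uf v = ph i \<cdot>\<^sub>m pauli n (2 ^ i) (mrow v i)" using ph by blast
  have phz: "\<forall>i<n. ph i \<noteq> 0" using ph by blast
  have c: "\<forall>i<n. (2::nat) ^ i < 2 ^ n" by simp
  have key: "(V * (mat_adjoint (Uf v) * pauli n 0 x * Uf v) * mat_adjoint V) $$ (0, 0) \<noteq> 0 \<longleftrightarrow>
      (V * pauli n x (fl v x) * mat_adjoint V) $$ (0, 0) \<noteq> 0" if x: "x < 2 ^ n" for x
  proof -
    obtain \<theta> where th: "\<theta> \<noteq> 0" "mat_adjoint (Uf v) * pauli n 0 x * Uf v =
        \<theta> \<cdot>\<^sub>m pauli n (xf (\<lambda>i. 2 ^ i) x n) (xf (mrow v) x n)"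
      using conj_pauli0[OF Uu hyp phz c x] by blast
    have xx: "xf (\<lambda>i. 2 ^ i) x n = x" using x by (simp add: xf_pow2 take_bit_nat_eq_self)
    have "V * (mat_adjoint (Uf v) * pauli n 0 x * Uf v) * mat_adjoint V = \<theta> \<cdot>\<^sub>m (V * pauli n x (fl v x) * mat_adjoint V)"
      using th(2) xx conj_smult[OF Va, of "pauli n x (fl v x)" \<theta>] adj_adj by (simp add: fl_def)
    moreover have Mc: "V * pauli n x (fl v x) * mat_adjoint V \<in> carrier_mat (2^n) (2^n)"
      using Vu adj_carrier by (auto simp: unit_mat_def)
    moreover have "(\<theta> \<cdot>\<^sub>m (V * pauli n x (fl v x) * mat_adjoint V)) $$ (0, 0) = \<theta> * (V * pauli n x (fl v x) * mat_adjoint V) $$ (0, 0)"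
    proof -
      have "dim_row (V * pauli n x (fl v x) * mat_adjoint V) = 2 ^ n" "dim_col (V * pauli n x (fl v x) * mat_adjoint V) = 2 ^ n"
        using Mc by auto
      thus ?thesis by (intro index_smult_mat) simp_all
    qed
    ultimately show ?thesis using th(1) by simp
  qed
  show ?thesis using key fl_lt by auto
qed

end

lemma K1:
  "{x. x < 2 ^ n \<and> (V * (mat_adjoint (1\<^sub>m (2^n)) * pauli n 0 x * 1\<^sub>m (2^n)) * mat_adjoint V) $$ (0, 0) \<noteq> 0} =
    {x. x < 2 ^ n \<and> (0, x) \<in> {(a, b). a < 2 ^ n \<and> b < 2 ^ n \<and> (V * pauli n a b * mat_adjoint V) $$ (0, 0) \<noteq> 0}}"
  by (auto simp: adj_one)

theorem lemma2:
  fixes n :: nat and P :: "bit poly" and Uf :: "nat \<Rightarrow> complex mat" and V :: "complex mat"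
  assumes "irreducible P" and "degree P = n"
    and "mub_family n P Uf"
    and "clifford n V"
  shows "(\<Sum>U\<leftarrow>mub_ensemble n Uf. Max ((\<lambda>b. outcome_prob U V b) ` {..<2 ^ n})) = 2
    \<and> (\<forall>U \<in> set (mub_ensemble n Uf). \<forall>C D. z_tableau n (U * mat_adjoint V) C D \<longrightarrow>
         card {b. b < 2 ^ n \<and> outcome_prob U V b = 1 / 2 ^ rank_F2 C} = 2 ^ rank_F2 C \<and>
         card {b. b < 2 ^ n \<and> outcome_prob U V b = 0} = 2 ^ n - 2 ^ rank_F2 C)"
proof
  interpret gal: galois n P using assms(1,2) by unfold_locales
  define S where "S = {(a, b). a < (2::nat) ^ n \<and> b < (2::nat) ^ n \<and> (V * pauli n a b * mat_adjoint V) $$ (0, 0) \<noteq> 0}"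
  have cS: "card S = 2 ^ n" using card_S[OF assms(4)] by (simp add: S_def)
  have Ssub: "S \<subseteq> {..<2^n} \<times> {..<2^n}" by (auto simp: S_def)
  have S0: "(0, 0) \<in> S"
  proof -
    have Vu: "unit_mat n V" using assms(4) unitary_unit by (simp add: clifford_def)
    have Vc: "V \<in> carrier_mat (2^n) (2^n)" using Vu by (simp add: unit_mat_def)
    have "V * pauli n 0 0 * mat_adjoint V = 1\<^sub>m (2^n)"
      using Vu right_mult_one_mat[OF Vc] by (simp add: pauli_00 unit_mat_def)
    thus ?thesis by (simp add: S_def)
  qed
  have ens1: "1\<^sub>m (2^n) \<in> set (mub_ensemble n Uf)" by (simp add: mub_ensemble_def)
  have ensv: "v < 2 ^ n \<Longrightarrow> Uf v \<in> set (mub_ensemble n Uf)" for v by (simp add: mub_ensemble_def)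
  have M1: "Max ((\<lambda>b. outcome_prob (1\<^sub>m (2^n)) V b) ` {..<2 ^ n}) = card {x. x < 2 ^ n \<and> (0, x) \<in> S} / 2 ^ n"
    using part1_max[OF assms(4)] ens_prop[OF assms(3) ens1] K1 by (simp add: S_def)
  have Mv: "Max ((\<lambda>b. outcome_prob (Uf v) V b) ` {..<2 ^ n}) = card {x. x < 2 ^ n \<and> (x, gal.fl v x) \<in> S} / 2 ^ n"
    if v: "v < 2 ^ n" for v
    using part1_max[OF assms(4)] ens_prop[OF assms(3) ensv[OF v]] gal.Kv[OF assms(3) v assms(4)] by (simp add: S_def)
  have "(\<Sum>U\<leftarrow>mub_ensemble n Uf. Max ((\<lambda>b. outcome_prob U V b) ` {..<2 ^ n})) =
      Max ((\<lambda>b. outcome_prob (1\<^sub>m (2^n)) V b) ` {..<2 ^ n}) + (\<Sum>v<2^n. Max ((\<lambda>b. outcome_prob (Uf v) V b) ` {..<2 ^ n}))"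
    by (simp add: mub_ensemble_def interv_sum_list_conv_sum_set_nat atLeast0LessThan comp_def)
  also have "\<dots> = card {x. x < 2 ^ n \<and> (0, x) \<in> S} / 2 ^ n + (\<Sum>v<2^n. card {x. x < 2 ^ n \<and> (x, gal.fl v x) \<in> S} / 2 ^ n)"
    using M1 Mv by simp
  also have "\<dots> = real (card {x. x < 2 ^ n \<and> (0, x) \<in> S} + (\<Sum>v<2^n. card {x. x < 2 ^ n \<and> (x, gal.fl v x) \<in> S})) / 2 ^ n"
    by (simp add: sum_divide_distrib add_divide_distrib)
  also have "\<dots> = real (2 ^ n + card S) / 2 ^ n" using gal.count[OF Ssub S0] by simp
  also have "\<dots> = 2" using cS by simp
  finally show "(\<Sum>U\<leftarrow>mub_ensemble n Uf. Max ((\<lambda>b. outcome_prob U V b) ` {..<2 ^ n})) = 2" .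
next
  show "\<forall>U \<in> set (mub_ensemble n Uf). \<forall>C D. z_tableau n (U * mat_adjoint V) C D \<longrightarrow>
         card {b. b < 2 ^ n \<and> outcome_prob U V b = 1 / 2 ^ rank_F2 C} = 2 ^ rank_F2 C \<and>
         card {b. b < 2 ^ n \<and> outcome_prob U V b = 0} = 2 ^ n - 2 ^ rank_F2 C"
    using part2[OF assms(4)] ens_prop[OF assms(3)] by blast
qed


end
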